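(* Let $n\geq 1$ and let $\varphi:[0,\infty)\to[0,\infty)$ be a continuous function such that $\varphi(|\mathbf{k}|)>0$ for almost every $\mathbf{k}\in\mathbf{R}_{n}$ and \[ \int_{0}^{\infty}\frac{k^{n-1}}{(1+\varphi(k))^{2}}\,dk<\infty . \] Let $A$ be the operator of multiplication by $\varphi(|\mathbf{k}|)$ in $\mathbb{L}_{2}(\mathbf{R}_{n})$ with domain $\mathcal{D}(A)=\{f\in\mathbb{L}_{2}(\mathbf{R}_{n}):\ \int_{\mathbf{R}_{n}}(1+\varphi(|\mathbf{k}|))^{2}|f(\mathbf{k})|^{2}d\mathbf{k}<\infty\}$, and let $A_{0}$ be the restriction of $A$ to \[ \mathcal{D}_{0}(A)=\Big\{f\in\mathcal{D}(A):\ \int_{\mathbf{R}_{n}}f(\mathbf{k})\,d\mathbf{k}=0\Big\}. \] Then $A$ is the unique non-negative self-adjoint extension of $A_{0}$ in $\mathbb{L}_{2}(\mathbf{R}_{n})$ (i.e. $A$ has no non-negative singular perturbations) if and only if \[ \int_{0}^{\infty}\frac{k^{n-1}}{\varphi(k)(1+\varphi(k))}\,dk=\infty\qquad\text{and}\qquad\int_{0}^{\infty}\frac{k^{n-1}}{1+\varphi(k)}\,dk=\infty . \]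
   Context: A singular perturbation of $A$ is a self-adjoint extension of $A_{0}$ in $\mathbb{L}_{2}(\mathbf{R}_{n})$ other than $A$. The functional $f\mapsto\int_{\mathbf{R}_{n}}f(\mathbf{k})d\mathbf{k}$ is well defined on $\mathcal{D}(A)$ under the integrability hypothesis. *)

theory Defs
  imports "HOL-Analysis.Analysis"
begin

text \<open>Elements of L2(R_n) are represented by measurable complex functions on real^'n,
  with square-integrable modulus; operators are represented by their graphs
  (relations), considered modulo equality almost everywhere.\<close>

definition L2 :: "(real^'n \<Rightarrow> complex) set" where
  "L2 = {f. f \<in> borel_measurable lebesgue \<and> integrable lebesgue (\<lambda>k. (cmod (f k))\<^sup>2)}"

definition L2_inner :: "(real^'n \<Rightarrow> complex) \<Rightarrow> (real^'n \<Rightarrow> complex) \<Rightarrow> complex" where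
  "L2_inner f g = (LINT k|lebesgue. cnj (f k) * g k)"

definition is_operator :: "((real^'n \<Rightarrow> complex) \<times> (real^'n \<Rightarrow> complex)) set \<Rightarrow> bool" where
  "is_operator T \<longleftrightarrow> T \<subseteq> L2 \<times> L2 \<and>
     (\<forall>(f,u)\<in>T. \<forall>(g,v)\<in>T. (AE k in lebesgue. f k = g k) \<longrightarrow> (AE k in lebesgue. u k = v k))"

definition adjoint_op :: "((real^'n \<Rightarrow> complex) \<times> (real^'n \<Rightarrow> complex)) set
    \<Rightarrow> ((real^'n \<Rightarrow> complex) \<times> (real^'n \<Rightarrow> complex)) set" where
  "adjoint_op T = {(g,h). g \<in> L2 \<and> h \<in> L2 \<and> (\<forall>(f,u)\<in>T. L2_inner u g = L2_inner f h)}"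

text \<open>Self-adjoint: an operator equal to its adjoint (this forces dense domain).\<close>
definition self_adjoint_op :: "((real^'n \<Rightarrow> complex) \<times> (real^'n \<Rightarrow> complex)) set \<Rightarrow> bool" where
  "self_adjoint_op T \<longleftrightarrow> is_operator T \<and> T = adjoint_op T"

definition nonneg_op :: "((real^'n \<Rightarrow> complex) \<times> (real^'n \<Rightarrow> complex)) set \<Rightarrow> bool" where
  "nonneg_op T \<longleftrightarrow> (\<forall>(f,u)\<in>T. 0 \<le> Re (L2_inner f u))"

definition mult_dom :: "(real \<Rightarrow> real) \<Rightarrow> (real^'n \<Rightarrow> complex) set" where
  "mult_dom \<phi> = {f. f \<in> L2 \<and>
     integrable lebesgue (\<lambda>k. (1 + \<phi> (norm k))\<^sup>2 * (cmod (f k))\<^sup>2)}"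

definition mult_op :: "(real \<Rightarrow> real) \<Rightarrow> ((real^'n \<Rightarrow> complex) \<times> (real^'n \<Rightarrow> complex)) set" where
  "mult_op \<phi> = {(f,u). f \<in> mult_dom \<phi> \<and> u \<in> L2 \<and>
     (AE k in lebesgue. u k = complex_of_real (\<phi> (norm k)) * f k)}"

definition mult_op0 :: "(real \<Rightarrow> real) \<Rightarrow> ((real^'n \<Rightarrow> complex) \<times> (real^'n \<Rightarrow> complex)) set" where
  "mult_op0 \<phi> = {(f,u). (f,u) \<in> mult_op \<phi> \<and> (LINT k|lebesgue. f k) = 0}"

end

theory Submission
  imports Defs
begin
lemma lebesgue_meas_of_borel:
  "f \<in> borel_measurable borel \<Longrightarrow> f \<in> borel_measurable (lebesgue :: ('a::euclidean_space) measure)"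
  using measurable_completion[of f lborel borel] by (simp only: measurable_lborel2)

lemma borel_measurable_cnj_comp[measurable]:
  "f \<in> borel_measurable M \<Longrightarrow> (\<lambda>x. cnj (f x)) \<in> borel_measurable M"
proof -
  have "cnj \<in> borel_measurable borel"
    by (intro borel_measurable_continuous_onI continuous_intros)
  moreover assume "f \<in> borel_measurable M"
  ultimately show ?thesis using measurable_compose by blast
qed

lemma L2_I: "f \<in> borel_measurable lebesgue \<Longrightarrow> integrable lebesgue (\<lambda>k. (cmod (f k))\<^sup>2) \<Longrightarrow> f \<in> L2"
  by (simp add: L2_def)

lemma L2_D: "f \<in> L2 \<Longrightarrow> f \<in> borel_measurable lebesgue"
  "f \<in> L2 \<Longrightarrow> integrable lebesgue (\<lambda>k. (cmod (f k))\<^sup>2)"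
  by (auto simp: L2_def)

lemma L2_bound:
  assumes f: "f \<in> L2" and g: "g \<in> borel_measurable lebesgue"
    and le: "AE k in lebesgue. cmod (g k) \<le> C * cmod (f k)"
  shows "g \<in> L2"
proof (rule L2_I[OF g])
  have "integrable lebesgue (\<lambda>k. C\<^sup>2 * (cmod (f k))\<^sup>2)" using L2_D[OF f] by simp
  then show "integrable lebesgue (\<lambda>k. (cmod (g k))\<^sup>2)"
  proof (rule Bochner_Integration.integrable_bound)
    show "(\<lambda>k. (cmod (g k))\<^sup>2) \<in> borel_measurable lebesgue" using g by measurable
    show "AE k in lebesgue. norm ((cmod (g k))\<^sup>2) \<le> norm (C\<^sup>2 * (cmod (f k))\<^sup>2)"
      using le
    proof eventually_elim
      case (elim k)
      have "(cmod (g k))\<^sup>2 \<le> (C * cmod (f k))\<^sup>2"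
        using elim by (intro power_mono) auto
      then show ?case by (simp add: power_mult_distrib)
    qed
  qed
qed

lemma L2_add:
  assumes f: "f \<in> L2" and g: "g \<in> L2"
  shows "(\<lambda>k. f k + g k) \<in> L2"
proof (rule L2_I)
  show "(\<lambda>k. f k + g k) \<in> borel_measurable lebesgue" using L2_D(1)[OF f] L2_D(1)[OF g] by measurable
  have "integrable lebesgue (\<lambda>k. 2 * (cmod (f k))\<^sup>2 + 2 * (cmod (g k))\<^sup>2)"
    using L2_D(2)[OF f] L2_D(2)[OF g] by simp
  then show "integrable lebesgue (\<lambda>k. (cmod (f k + g k))\<^sup>2)"
  proof (rule Bochner_Integration.integrable_bound)
    show "(\<lambda>k. (cmod (f k + g k))\<^sup>2) \<in> borel_measurable lebesgue"
      using L2_D(1)[OF f] L2_D(1)[OF g] by measurable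
    show "AE k in lebesgue. norm ((cmod (f k + g k))\<^sup>2) \<le> norm (2 * (cmod (f k))\<^sup>2 + 2 * (cmod (g k))\<^sup>2)"
    proof (intro AE_I2)
      fix k
      have "cmod (f k + g k) \<le> cmod (f k) + cmod (g k)" by (rule norm_triangle_ineq)
      then have "(cmod (f k + g k))\<^sup>2 \<le> (cmod (f k) + cmod (g k))\<^sup>2" by (intro power_mono) auto
      also have "\<dots> \<le> 2 * (cmod (f k))\<^sup>2 + 2 * (cmod (g k))\<^sup>2"
        using zero_le_power2[of "cmod (f k) - cmod (g k)"] unfolding power2_eq_square by (simp add: algebra_simps)
      finally show "norm ((cmod (f k + g k))\<^sup>2) \<le> norm (2 * (cmod (f k))\<^sup>2 + 2 * (cmod (g k))\<^sup>2)" by simp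
    qed
  qed
qed

lemma L2_scale:
  assumes f: "f \<in> L2" shows "(\<lambda>k. c * f k) \<in> L2"
proof (rule L2_bound[OF f, of _ "cmod c"])
  have [measurable]: "f \<in> borel_measurable lebesgue" using L2_D(1)[OF f] .
  show "(\<lambda>k. c * f k) \<in> borel_measurable lebesgue" by measurable
qed (simp add: norm_mult)

lemma L2_uminus: "f \<in> L2 \<Longrightarrow> (\<lambda>k. - f k) \<in> L2"
  using L2_scale[of f "-1"] by simp

lemma L2_diff: "f \<in> L2 \<Longrightarrow> g \<in> L2 \<Longrightarrow> (\<lambda>k. f k - g k) \<in> L2"
  using L2_add[of f "\<lambda>k. - g k"] L2_uminus[of g] by simp

lemma L2_prod_integrable:
  assumes f: "f \<in> L2" and g: "g \<in> L2"
  shows "integrable lebesgue (\<lambda>k. cnj (f k) * g k)"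
proof -
  have "integrable lebesgue (\<lambda>k. (cmod (f k))\<^sup>2 + (cmod (g k))\<^sup>2)"
    using L2_D(2)[OF f] L2_D(2)[OF g] by simp
  then show ?thesis
  proof (rule Bochner_Integration.integrable_bound)
    have [measurable]: "f \<in> borel_measurable lebesgue" "g \<in> borel_measurable lebesgue"
      using L2_D(1)[OF f] L2_D(1)[OF g] by auto
    show "(\<lambda>k. cnj (f k) * g k) \<in> borel_measurable lebesgue" by measurable
    show "AE k in lebesgue. norm (cnj (f k) * g k) \<le> norm ((cmod (f k))\<^sup>2 + (cmod (g k))\<^sup>2)"
    proof (intro AE_I2)
      fix k
      have a: "2 * (cmod (f k) * cmod (g k)) \<le> cmod (f k) * cmod (f k) + cmod (g k) * cmod (g k)"
        using zero_le_power2[of "cmod (f k) - cmod (g k)"] unfolding power2_eq_square by (simp add: algebra_simps)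
      have b: "0 \<le> cmod (f k) * cmod (g k)" by simp
      have "cmod (f k) * cmod (g k) \<le> (cmod (f k))\<^sup>2 + (cmod (g k))\<^sup>2"
        using a b unfolding power2_eq_square by linarith
      then have "cmod (f k) * cmod (g k) \<le> (cmod (f k))\<^sup>2 + (cmod (g k))\<^sup>2"
        by simp
      then show "norm (cnj (f k) * g k) \<le> norm ((cmod (f k))\<^sup>2 + (cmod (g k))\<^sup>2)"
        by (simp add: norm_mult)
    qed
  qed
qed

lemma integrable_const_lebesgue:
  assumes "integrable (lebesgue :: (real^'n) measure) (\<lambda>_. c)" shows "c = (0::'b::{banach, second_countable_topology})"
proof (rule ccontr)
  assume c: "c \<noteq> 0"
  have "(\<integral>\<^sup>+ k. ennreal (norm c) \<partial>(lebesgue :: (real^'n) measure)) < \<infinity>"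
    using assms unfolding integrable_iff_bounded by simp
  moreover have "(\<integral>\<^sup>+ k. ennreal (norm c) \<partial>(lebesgue :: (real^'n) measure)) = \<infinity>"
    using c by (simp add: nn_integral_completion emeasure_completion ennreal_mult_top)
  ultimately show False by simp
qed



lemma emeasure_cball_max:
  "emeasure lborel (cball (0::real^'n) r) = ennreal (unit_ball_vol CARD('n) * (max r 0) ^ CARD('n))"
proof (cases "r \<ge> 0")
  case True then show ?thesis using emeasure_cball[of r "0::real^'n"] by simp
next
  case False then have "cball (0::real^'n) r = {}" by auto
  then show ?thesis using False by simp
qed

lemma distr_norm_eq:
  "distr (lborel::(real^'n) measure) borel norm =
   density lborel (\<lambda>x. ennreal (CARD('n) * unit_ball_vol CARD('n) * x ^ (CARD('n) - 1)) * indicator {0<..} x)"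
  (is "?M = ?N")
proof (rule measure_eqI_generator_eq_countable[where E="range (\<lambda>(a, b). {a <.. b::real})" and \<Omega>=UNIV
     and A="range (\<lambda>m::nat. {-real m<..real m})"])
  let ?v = "unit_ball_vol CARD('n)"
  let ?n = "CARD('n)"
  have v: "?v > 0" by simp
  show "Int_stable (range (\<lambda>(a, b). {a <.. b::real}))"
    by (auto simp: Int_stable_def intro!: image_eqI[where x="(max _ _, min _ _)"])
  show "range (\<lambda>(a, b). {a <.. b::real}) \<subseteq> Pow UNIV" by auto
  show "sets ?M = sigma_sets UNIV (range (\<lambda>(a, b). {a <.. b::real}))"
  proof -
    have "sets ?M = sets (sigma UNIV (range (\<lambda>(a, b). {a <.. b::real})))"
      by (simp only: sets_distr borel_sigma_sets_Ioc[symmetric])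
    also have "\<dots> = sigma_sets UNIV (range (\<lambda>(a, b). {a <.. b::real}))"
      by (rule sets_measure_of) auto
    finally show ?thesis .
  qed
  then show "sets ?N = sigma_sets UNIV (range (\<lambda>(a, b). {a <.. b::real}))" by simp
  show "range (\<lambda>m::nat. {-real m<..real m}) \<subseteq> range (\<lambda>(a, b). {a <.. b::real})" by auto
  show "\<Union> (range (\<lambda>m::nat. {-real m<..real m})) = UNIV"
  proof safe
    fix x :: real
    obtain m :: nat where "\<bar>x\<bar> < m" using reals_Archimedean2 by blast
    then show "x \<in> \<Union> (range (\<lambda>m::nat. {-real m<..real m}))"
      by (intro UN_I[of m]) auto
  qed auto
  show "countable (range (\<lambda>m::nat. {-real m<..real m}))" by simp
  have eqM: "emeasure ?M {a<..b} = ennreal (?v * (max b 0) ^ ?n - ?v * (max a 0) ^ ?n)" if ab: "a \<le> b" for a b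
  proof -
    have pre: "norm -` {a<..b} = cball (0::real^'n) b - cball 0 a" by auto
    have "emeasure ?M {a<..b} = emeasure lborel (cball (0::real^'n) b - cball 0 a)"
      apply (subst emeasure_distr) apply simp apply simp
      apply (simp only: space_lborel space_borel Int_UNIV_right pre) done
    also have "\<dots> = emeasure lborel (cball (0::real^'n) b) - emeasure lborel (cball (0::real^'n) a)"
      using ab by (intro emeasure_Diff) (auto simp: emeasure_cball_max)
    also have "\<dots> = ennreal (?v * (max b 0) ^ ?n - ?v * (max a 0) ^ ?n)"
      by (simp add: emeasure_cball_max ennreal_minus)
    finally show ?thesis .
  qed
  have eqN: "emeasure ?N {a<..b} = ennreal (?v * (max b 0) ^ ?n - ?v * (max a 0) ^ ?n)" if ab: "a \<le> b" for a b
  proof (cases "b \<le> 0")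
    case True
    have "emeasure ?N {a<..b} = (\<integral>\<^sup>+ (x::real). 0 \<partial>lborel)"
    proof (subst emeasure_density)
      show "(\<integral>\<^sup>+x\<in>{a<..b}. ennreal (?n * ?v * x ^ (?n - 1)) * indicator {0<..} x \<partial>lborel) = (\<integral>\<^sup>+ (x::real). 0 \<partial>lborel)"
        by (rule nn_integral_cong) (use True in \<open>auto simp: indicator_def\<close>)
    qed auto
    then show ?thesis using True ab by simp
  next
    case False
    let ?a = "max a 0"
    have "emeasure ?N {a<..b} = (\<integral>\<^sup>+ x. ennreal (?n * ?v * x ^ (?n - 1)) * indicator {?a..b} x \<partial>lborel)"
      apply (subst emeasure_density)
        apply simp apply simp
      apply (rule nn_integral_cong_AE)
      using AE_lborel_singleton[of ?a]
      by eventually_elim (auto simp: indicator_def)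
    also have "\<dots> = ennreal (?v * b ^ ?n - ?v * ?a ^ ?n)"
    proof (rule nn_integral_FTC_Icc)
      show "(\<lambda>x. ?n * ?v * x ^ (?n - 1)) \<in> borel_measurable borel" by measurable
      show "?a \<le> b" using False ab by simp
      fix x assume "x \<in> {?a..b}"
      then have x: "x \<ge> 0" by auto
      show "0 \<le> ?n * ?v * x ^ (?n - 1)" using x by simp
      show "((\<lambda>x. ?v * x ^ ?n) has_real_derivative ?n * ?v * x ^ (?n - 1)) (at x)"
        by (auto intro!: derivative_eq_intros)
    qed
    finally show ?thesis using False by (simp add: max_absorb1)
  qed
  show "emeasure ?M X = emeasure ?N X" if "X \<in> range (\<lambda>(a, b). {a <.. b::real})" for X
  proof -
    obtain a b where X: "X = {a<..b}" using \<open>X \<in> _\<close> by auto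
    show ?thesis
    proof (cases "a \<le> b")
      case True then show ?thesis using eqM eqN X by simp
    next
      case False then show ?thesis using X by simp
    qed
  qed
  show "emeasure ?M X \<noteq> \<infinity>" if "X \<in> range (\<lambda>m::nat. {-real m<..real m})" for X
    using that eqM by auto
qed


lemma nn_integral_radial:
  fixes F :: "real \<Rightarrow> ennreal"
  assumes F[measurable]: "F \<in> borel_measurable borel"
  shows "(\<integral>\<^sup>+ k. F (norm k) \<partial>(lebesgue :: (real^'n) measure)) =
    ennreal (CARD('n) * unit_ball_vol CARD('n)) * (\<integral>\<^sup>+ r. ennreal (r ^ (CARD('n) - 1)) * F r * indicator {0<..} r \<partial>lborel)"
proof -
  let ?C = "CARD('n) * unit_ball_vol CARD('n)"
  have "(\<integral>\<^sup>+ k. F (norm k) \<partial>(lebesgue :: (real^'n) measure)) = (\<integral>\<^sup>+ k. F (norm k) \<partial>(lborel::(real^'n) measure))"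
    by (simp add: nn_integral_completion)
  also have "\<dots> = (\<integral>\<^sup>+ r. F r \<partial>(distr (lborel::(real^'n) measure) borel norm))"
    by (subst nn_integral_distr) auto
  also have "\<dots> = (\<integral>\<^sup>+ r. F r \<partial>(density lborel (\<lambda>x. ennreal (CARD('n) * unit_ball_vol CARD('n) * x ^ (CARD('n) - 1)) * indicator {0<..} x)))"
    by (simp only: distr_norm_eq)
  also have "\<dots> = (\<integral>\<^sup>+ r. (ennreal (CARD('n) * unit_ball_vol CARD('n) * r ^ (CARD('n) - 1)) * indicator {0<..} r) * F r \<partial>lborel)"
    by (subst nn_integral_density) auto
  also have "\<dots> = (\<integral>\<^sup>+ r. ennreal ?C * (ennreal (r ^ (CARD('n) - 1)) * F r * indicator {0<..} r) \<partial>lborel)"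
  proof (rule nn_integral_cong)
    fix r :: real
    show "ennreal (CARD('n) * unit_ball_vol CARD('n) * r ^ (CARD('n) - 1)) * indicator {0<..} r * F r =
          ennreal ?C * (ennreal (r ^ (CARD('n) - 1)) * F r * indicator {0<..} r)"
      by (cases "r > 0") (auto simp: ennreal_mult mult_ac)
  qed
  also have "\<dots> = ennreal ?C * (\<integral>\<^sup>+ r. ennreal (r ^ (CARD('n) - 1)) * F r * indicator {0<..} r \<partial>lborel)"
    by (rule nn_integral_cmult) auto
  finally show ?thesis .
qed

lemma nn_integral_radial_infinite_iff:
  fixes F :: "real \<Rightarrow> ennreal"
  assumes F[measurable]: "F \<in> borel_measurable borel"
  shows "(\<integral>\<^sup>+ k. F (norm k) \<partial>(lebesgue :: (real^'n) measure)) = \<infinity> \<longleftrightarrow>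
    (\<integral>\<^sup>+ r. ennreal (r ^ (CARD('n) - 1)) * F r * indicator {0<..} r \<partial>lborel) = \<infinity>"
proof -
  have v: "\<And>m::nat. unit_ball_vol (real m) \<noteq> 0"
    using unit_ball_vol_pos by (metis less_irrefl of_nat_0_le_iff)
  show ?thesis unfolding nn_integral_radial[OF F]
    using v by (simp add: ennreal_mult_eq_top_iff)
qed

definition ee :: "(real \<Rightarrow> real) \<Rightarrow> real^'n \<Rightarrow> real" where
  "ee \<phi> k = 1 / (1 + \<phi> (norm k))"

lemma L2_ae:
  assumes "f \<in> L2" "g \<in> borel_measurable lebesgue" "AE k in lebesgue. f k = g k"
  shows "g \<in> L2"
  by (rule L2_bound[OF assms(1,2), of 1]) (use assms(3) in \<open>auto\<close>)

lemma bdd_L2: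
  assumes f: "f \<in> borel_measurable lebesgue" and S: "S \<in> sets lebesgue" "emeasure lebesgue S < \<infinity>"
    and bd: "\<And>k. cmod (f k) \<le> C * indicator S k"
  shows "f \<in> L2"
proof (rule L2_I[OF f])
  have "integrable lebesgue (\<lambda>k. C\<^sup>2 * indicator S k :: real)"
    using S by simp
  then show "integrable lebesgue (\<lambda>k. (cmod (f k))\<^sup>2)"
  proof (rule Bochner_Integration.integrable_bound)
    show "(\<lambda>k. (cmod (f k))\<^sup>2) \<in> borel_measurable lebesgue" using f by measurable
    show "AE k in lebesgue. norm ((cmod (f k))\<^sup>2) \<le> norm (C\<^sup>2 * indicator S k :: real)"
    proof (intro AE_I2)
      fix k
      show "norm ((cmod (f k))\<^sup>2) \<le> norm (C\<^sup>2 * indicator S k :: real)"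
      proof (cases "k \<in> S")
        case True
        then have "cmod (f k) \<le> C" using bd[of k] by simp
        then have "(cmod (f k))\<^sup>2 \<le> C\<^sup>2" by (intro power_mono) auto
        then show ?thesis using True by simp
      next
        case False
        then have "cmod (f k) \<le> 0" using bd[of k] by simp
        then show ?thesis using False by simp
      qed
    qed
  qed
qed

lemma emeasure_lebesgue_cball_finite:
  "emeasure (lebesgue :: (real^'n) measure) (cball 0 R) < \<infinity>"
proof -
  have "emeasure (lebesgue :: (real^'n) measure) (cball 0 R) = emeasure lborel (cball (0::real^'n) R)"
    by (simp add: emeasure_completion)
  then show ?thesis by (simp add: emeasure_cball_max)
qed

lemma emeasure_lebesgue_bounded_finite:
  assumes "S \<in> sets lebesgue" "S \<subseteq> cball (0::real^'n) R"
  shows "emeasure lebesgue S < \<infinity>"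
proof -
  have a: "emeasure lebesgue S \<le> emeasure (lebesgue :: (real^'n) measure) (cball 0 R)"
    using assms by (intro emeasure_mono) auto
  show ?thesis using order_le_less_trans[OF a emeasure_lebesgue_cball_finite[of R]] .
qed

lemma cmod_one_plus_of_real[simp]: "cmod (1 + complex_of_real x) = \<bar>1 + x\<bar>"
  by (metis norm_of_real of_real_1 of_real_add)

locale phi_ctx =
  fixes \<phi> :: "real \<Rightarrow> real"
  assumes cont: "continuous_on {0..} \<phi>" and nonneg: "\<And>x. 0 \<le> x \<Longrightarrow> 0 \<le> \<phi> x"
begin

lemma Phi_nonneg: "0 \<le> \<phi> (norm k)"
  using nonneg by simp

lemma Phi_borel[measurable]: "(\<lambda>k::real^'n. \<phi> (norm k)) \<in> borel_measurable borel"
proof -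
  have "continuous_on UNIV (\<lambda>k::real^'n. \<phi> (norm k))"
    by (rule continuous_on_compose2[OF cont continuous_on_norm_id]) auto
  then show ?thesis by (rule borel_measurable_continuous_onI)
qed

lemma Phi_leb[measurable]: "(\<lambda>k::real^'n. \<phi> (norm k)) \<in> borel_measurable lebesgue"
  by (rule lebesgue_meas_of_borel[OF Phi_borel])

lemma ee_leb[measurable]: "(\<lambda>k::real^'n. ee \<phi> k) \<in> borel_measurable lebesgue"
  unfolding ee_def by measurable

lemma ee_pos: "0 < ee \<phi> k"
  using Phi_nonneg[of k] by (simp add: ee_def)

lemma ee_le1: "ee \<phi> k \<le> 1"
  using Phi_nonneg[of k] by (simp add: ee_def)

lemma ee_mult: "(1 + \<phi> (norm k)) * ee \<phi> k = 1"
  using Phi_nonneg[of k] by (simp add: ee_def)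

lemma ee_Phi: "\<phi> (norm k) * ee \<phi> k = 1 - ee \<phi> k"
  using ee_mult[of k] by (simp add: algebra_simps)

lemma Phi_bounded: "\<exists>M. \<forall>k::real^'n. norm k \<le> R \<longrightarrow> \<phi> (norm k) \<le> M"
proof -
  have "compact (\<phi> ` {0..max R 0})"
    by (rule compact_continuous_image) (auto intro: continuous_on_subset[OF cont])
  then obtain M where M: "\<forall>y \<in> \<phi> ` {0..max R 0}. norm y \<le> M"
    using compact_imp_bounded bounded_iff by metis
  show ?thesis
  proof (intro exI allI impI)
    fix k :: "real^'n" assume "norm k \<le> R"
    then have "norm k \<in> {0..max R 0}" by auto
    then have "norm (\<phi> (norm k)) \<le> M" using M by blast
    then show "\<phi> (norm k) \<le> M" by simp
  qed
qed

lemma mult_dom_iff: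
  "f \<in> mult_dom \<phi> \<longleftrightarrow> f \<in> L2 \<and> (\<lambda>k. of_real (1 + \<phi> (norm k)) * f k) \<in> L2"
proof -
  have "f \<in> borel_measurable lebesgue \<Longrightarrow> (\<lambda>k. of_real (1 + \<phi> (norm k)) * f k) \<in> borel_measurable lebesgue"
    by measurable
  then show ?thesis
    unfolding mult_dom_def L2_def by (auto simp: norm_mult power_mult_distrib)
qed

lemma dom_L2: "f \<in> mult_dom \<phi> \<Longrightarrow> f \<in> L2"
  using mult_dom_iff by auto

lemma dom_L2': "f \<in> mult_dom \<phi> \<Longrightarrow> (\<lambda>k. of_real (1 + \<phi> (norm k)) * f k) \<in> L2"
  using mult_dom_iff by auto

lemma dom_meas[measurable_dest]: "f \<in> mult_dom \<phi> \<Longrightarrow> f \<in> borel_measurable lebesgue"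
  using dom_L2 L2_D by auto

lemma dom_Phi: fixes f :: "real^'n \<Rightarrow> complex" assumes f: "f \<in> mult_dom \<phi>" shows "(\<lambda>k. of_real (\<phi> (norm k)) * f k) \<in> L2"
proof (rule L2_bound[OF dom_L2'[OF f], of _ 1])
  have [measurable]: "f \<in> borel_measurable lebesgue" using f by (rule dom_meas)
  show "(\<lambda>k. complex_of_real (\<phi> (norm k)) * f k) \<in> borel_measurable lebesgue" by measurable
  show "AE k in lebesgue. cmod (complex_of_real (\<phi> (norm k)) * f k) \<le> 1 * cmod (complex_of_real (1 + \<phi> (norm k)) * f k)"
  proof (intro AE_I2)
    fix k :: "real^'n"
    have "\<bar>\<phi> (norm k)\<bar> \<le> \<bar>1 + \<phi> (norm k)\<bar>" using Phi_nonneg[of k] by simp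
    then show "cmod (complex_of_real (\<phi> (norm k)) * f k) \<le> 1 * cmod (complex_of_real (1 + \<phi> (norm k)) * f k)"
      by (simp add: norm_mult mult_right_mono)
  qed
qed

lemma dom_intro:
  assumes "f \<in> L2" "(\<lambda>k. of_real (1 + \<phi> (norm k)) * f k) \<in> L2"
  shows "f \<in> mult_dom \<phi>"
  using assms mult_dom_iff by auto

lemma dom_add: assumes "f \<in> mult_dom \<phi>" "g \<in> mult_dom \<phi>" shows "(\<lambda>k. f k + g k) \<in> mult_dom \<phi>"
proof (rule dom_intro)
  show "(\<lambda>k. f k + g k) \<in> L2" using assms by (intro L2_add dom_L2)
  have "(\<lambda>k. of_real (1 + \<phi> (norm k)) * f k + of_real (1 + \<phi> (norm k)) * g k) \<in> L2"
    using assms by (intro L2_add dom_L2')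
  then show "(\<lambda>k. of_real (1 + \<phi> (norm k)) * (f k + g k)) \<in> L2"
    by (simp add: distrib_left)
qed

lemma dom_scale: assumes "f \<in> mult_dom \<phi>" shows "(\<lambda>k. c * f k) \<in> mult_dom \<phi>"
proof (rule dom_intro)
  show "(\<lambda>k. c * f k) \<in> L2" using assms by (intro L2_scale dom_L2)
  have "(\<lambda>k. c * (of_real (1 + \<phi> (norm k)) * f k)) \<in> L2"
    using assms by (intro L2_scale dom_L2')
  then show "(\<lambda>k. of_real (1 + \<phi> (norm k)) * (c * f k)) \<in> L2"
    by (simp add: mult_ac)
qed

lemma dom_diff: assumes "f \<in> mult_dom \<phi>" "g \<in> mult_dom \<phi>" shows "(\<lambda>k. f k - g k) \<in> mult_dom \<phi>"
  using dom_add[OF assms(1) dom_scale[OF assms(2), of "-1"]] by simp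

lemma dom_ae: assumes f: "f \<in> mult_dom \<phi>" and g: "g \<in> borel_measurable lebesgue"
  and ae: "AE k in lebesgue. f k = g k" shows "g \<in> mult_dom \<phi>"
proof (rule dom_intro)
  show "g \<in> L2" using L2_ae[OF dom_L2[OF f] g ae] .
  show "(\<lambda>k. of_real (1 + \<phi> (norm k)) * g k) \<in> L2"
  proof (rule L2_ae[OF dom_L2'[OF f]])
    show "(\<lambda>k. complex_of_real (1 + \<phi> (norm k)) * g k) \<in> borel_measurable lebesgue" using g by measurable
    show "AE k in lebesgue. complex_of_real (1 + \<phi> (norm k)) * f k = complex_of_real (1 + \<phi> (norm k)) * g k"
      using ae by auto
  qed
qed

lemma bdd_dom:
  fixes f :: "real^'n \<Rightarrow> complex"
  assumes f: "f \<in> borel_measurable lebesgue" and S: "S \<in> sets lebesgue" "S \<subseteq> cball 0 R"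
    and bd: "\<And>k. cmod (f k) \<le> C * indicator S k"
  shows "f \<in> mult_dom \<phi>"
proof (rule dom_intro)
  have Sfin: "emeasure lebesgue S < \<infinity>" by (rule emeasure_lebesgue_bounded_finite[OF S])
  show "f \<in> L2" by (rule bdd_L2[OF f S(1) Sfin bd])
  obtain M where M: "\<And>k::real^'n. norm k \<le> R \<Longrightarrow> \<phi> (norm k) \<le> M" using Phi_bounded[of R] by blast
  show "(\<lambda>k. of_real (1 + \<phi> (norm k)) * f k) \<in> L2"
  proof (rule bdd_L2[OF _ S(1) Sfin])
    show "(\<lambda>k. complex_of_real (1 + \<phi> (norm k)) * f k) \<in> borel_measurable lebesgue" using f by measurable
    fix k
    show "cmod (complex_of_real (1 + \<phi> (norm k)) * f k) \<le> ((1 + max M 0) * C) * indicator S k"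
    proof (cases "k \<in> S")
      case True
      then have "norm k \<le> R" using S by auto
      then have "\<phi> (norm k) \<le> M" by (rule M)
      then have "1 + \<phi> (norm k) \<le> 1 + max M 0" by (simp add: le_max_iff_disj)
      moreover have "cmod (f k) \<le> C" using bd[of k] True by simp
      ultimately have "(1 + \<phi> (norm k)) * cmod (f k) \<le> (1 + max M 0) * C"
        using Phi_nonneg[of k] by (intro mult_mono) auto
      then show ?thesis using True Phi_nonneg[of k] by (simp add: norm_mult)
    next
      case False
      then show ?thesis using bd[of k] by simp
    qed
  qed
qed

end

lemma L2_inner_cong:
  assumes "f \<in> L2" "f' \<in> L2" "g \<in> L2" "g' \<in> L2"
    and "AE k in lebesgue. f k = f' k" "AE k in lebesgue. g k = g' k"
  shows "L2_inner f g = L2_inner f' g'"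
proof -
  have [measurable]: "f \<in> borel_measurable lebesgue" "f' \<in> borel_measurable lebesgue"
    "g \<in> borel_measurable lebesgue" "g' \<in> borel_measurable lebesgue"
    using assms(1-4) by (auto dest: L2_D)
  show ?thesis unfolding L2_inner_def
    by (rule integral_cong_AE) (use assms(5,6) in auto)
qed

lemma adjoint_antimono: "S \<subseteq> T \<Longrightarrow> adjoint_op T \<subseteq> adjoint_op S"
  unfolding adjoint_op_def by auto

lemma adjoint_L2: "(g, h) \<in> adjoint_op T \<Longrightarrow> g \<in> L2 \<and> h \<in> L2"
  unfolding adjoint_op_def by auto

lemma adjointD: "(g, h) \<in> adjoint_op T \<Longrightarrow> (f, u) \<in> T \<Longrightarrow> L2_inner u g = L2_inner f h"
  unfolding adjoint_op_def by auto

lemma L2_inner_add_right: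
  assumes "u \<in> L2" "g1 \<in> L2" "g2 \<in> L2"
  shows "L2_inner u (\<lambda>k. g1 k + g2 k) = L2_inner u g1 + L2_inner u g2"
  unfolding L2_inner_def distrib_left
  by (rule Bochner_Integration.integral_add) (use assms in \<open>auto intro: L2_prod_integrable\<close>)

lemma adjoint_add:
  assumes T: "T \<subseteq> L2 \<times> L2" and a1: "(g1, h1) \<in> adjoint_op T" and a2: "(g2, h2) \<in> adjoint_op T"
  shows "(\<lambda>k. g1 k + g2 k, \<lambda>k. h1 k + h2 k) \<in> adjoint_op T"
proof -
  have L: "g1 \<in> L2" "h1 \<in> L2" "g2 \<in> L2" "h2 \<in> L2" using adjoint_L2[OF a1] adjoint_L2[OF a2] by auto
  show ?thesis unfolding adjoint_op_def
  proof (safe)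
    show "(\<lambda>k. g1 k + g2 k) \<in> L2" "(\<lambda>k. h1 k + h2 k) \<in> L2" using L by (auto intro: L2_add)
    fix f u assume fu: "(f, u) \<in> T"
    then have "f \<in> L2" "u \<in> L2" using T by auto
    then show "L2_inner u (\<lambda>k. g1 k + g2 k) = L2_inner f (\<lambda>k. h1 k + h2 k)"
      using adjointD[OF a1 fu] adjointD[OF a2 fu] L by (simp add: L2_inner_add_right)
  qed
qed

lemma sets_lebesgue_cball[measurable]: "cball (a::'a::euclidean_space) r \<in> sets lebesgue"
  using lmeasurable_cball by (rule fmeasurableD)

lemma ae_zero_real:
  fixes y :: "real^'n \<Rightarrow> real"
  assumes y[measurable]: "y \<in> borel_measurable lebesgue"
    and H: "\<And>S R. S \<in> sets lebesgue \<Longrightarrow> S \<subseteq> cball 0 R \<Longrightarrow>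
      integrable lebesgue (\<lambda>k. indicator S k * y k) \<and> integral\<^sup>L lebesgue (\<lambda>k. indicator S k * y k) = 0"
  shows "AE k in lebesgue. y k \<le> 0"
proof -
  have R: "AE k in lebesgue. k \<in> cball 0 (real R) \<longrightarrow> y k \<le> 0" for R :: nat
  proof -
    let ?S = "cball 0 (real R) \<inter> {k. y k > 0}"
    have S: "?S \<in> sets lebesgue" by measurable
    have HS: "integrable lebesgue (\<lambda>k. indicator ?S k * y k)" "integral\<^sup>L lebesgue (\<lambda>k. indicator ?S k * y k) = 0"
      using H[OF S, of "real R"] by auto
    have "AE k in lebesgue. indicator ?S k * y k = 0"
      using integral_nonneg_eq_0_iff_AE[OF HS(1)] HS(2) by (auto simp: indicator_def)
    then show ?thesis by eventually_elim (auto simp: indicator_def split: if_splits)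
  qed
  then have "AE k in lebesgue. \<forall>R::nat. k \<in> cball 0 (real R) \<longrightarrow> y k \<le> 0"
    unfolding AE_all_countable by blast
  then show ?thesis
  proof eventually_elim
    case (elim k)
    have "k \<in> cball 0 (real (nat \<lceil>norm k\<rceil>))" using real_nat_ceiling_ge[of "norm k"] by simp
    then show ?case using elim by blast
  qed
qed

lemma ae_zero_complex:
  fixes z :: "real^'n \<Rightarrow> complex"
  assumes z[measurable]: "z \<in> borel_measurable lebesgue"
    and H: "\<And>S R. S \<in> sets lebesgue \<Longrightarrow> S \<subseteq> cball 0 R \<Longrightarrow>
      integrable lebesgue (\<lambda>k. indicator S k *\<^sub>R z k) \<and> integral\<^sup>L lebesgue (\<lambda>k. indicator S k *\<^sub>R z k) = 0"
  shows "AE k in lebesgue. z k = 0"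
proof -
  have H1: "integrable lebesgue (\<lambda>k. indicator S k * Re (z k)) \<and> integral\<^sup>L lebesgue (\<lambda>k. indicator S k * Re (z k)) = 0"
    if "S \<in> sets lebesgue" "S \<subseteq> cball 0 R" for S R
  proof -
    from H[OF that] have i: "integrable lebesgue (\<lambda>k. indicator S k *\<^sub>R z k)" and
      v: "integral\<^sup>L lebesgue (\<lambda>k. indicator S k *\<^sub>R z k) = 0" by auto
    have "integrable lebesgue (\<lambda>k. Re (indicator S k *\<^sub>R z k))" using i by (rule integrable_Re)
    moreover have "integral\<^sup>L lebesgue (\<lambda>k. Re (indicator S k *\<^sub>R z k)) = 0"
      using i v by (subst integral_Re) auto
    moreover have "(\<lambda>k. Re (indicator S k *\<^sub>R z k)) = (\<lambda>k. indicator S k * Re (z k))" by auto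
    ultimately show ?thesis by (simp only:)
  qed
  have H2: "integrable lebesgue (\<lambda>k. indicator S k * Im (z k)) \<and> integral\<^sup>L lebesgue (\<lambda>k. indicator S k * Im (z k)) = 0"
    if "S \<in> sets lebesgue" "S \<subseteq> cball 0 R" for S R
  proof -
    from H[OF that] have i: "integrable lebesgue (\<lambda>k. indicator S k *\<^sub>R z k)" and
      v: "integral\<^sup>L lebesgue (\<lambda>k. indicator S k *\<^sub>R z k) = 0" by auto
    have "integrable lebesgue (\<lambda>k. Im (indicator S k *\<^sub>R z k))" using i by (rule integrable_Im)
    moreover have "integral\<^sup>L lebesgue (\<lambda>k. Im (indicator S k *\<^sub>R z k)) = 0"
      using i v by (subst integral_Im) auto
    moreover have "(\<lambda>k. Im (indicator S k *\<^sub>R z k)) = (\<lambda>k. indicator S k * Im (z k))" by auto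
    ultimately show ?thesis by (simp only:)
  qed
  have a1: "AE k in lebesgue. Re (z k) \<le> 0" by (rule ae_zero_real) (use H1 in auto)
  have a2: "AE k in lebesgue. - Re (z k) \<le> 0" by (rule ae_zero_real) (use H1 in auto)
  have a3: "AE k in lebesgue. Im (z k) \<le> 0" by (rule ae_zero_real) (use H2 in auto)
  have a4: "AE k in lebesgue. - Im (z k) \<le> 0" by (rule ae_zero_real) (use H2 in auto)
  from a1 a2 a3 a4 show ?thesis by eventually_elim (simp add: complex_eq_iff)
qed

lemma measure_lebesgue_cball:
  "measure (lebesgue :: (real^'n) measure) (cball 0 1) = unit_ball_vol CARD('n)"
proof -
  have "emeasure (lebesgue :: (real^'n) measure) (cball 0 1) = emeasure lborel (cball (0::real^'n) 1)"
    by (simp add: emeasure_completion)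
  also have "\<dots> = ennreal (unit_ball_vol CARD('n))" by (simp add: emeasure_cball_max)
  finally show ?thesis by (simp add: measure_def)
qed

lemma measure_lebesgue_cball_pos: "measure (lebesgue :: (real^'n) measure) (cball 0 1) > 0"
  unfolding measure_lebesgue_cball by (rule unit_ball_vol_pos) simp

context phi_ctx begin

lemma ee_mult_c: "(1 + complex_of_real (\<phi> (norm k))) * complex_of_real (ee \<phi> k) = 1"
  by (metis ee_mult of_real_1 of_real_add of_real_mult)

lemma ee_Phi_c: "complex_of_real (\<phi> (norm k)) * complex_of_real (ee \<phi> k) = 1 - complex_of_real (ee \<phi> k)"
  using ee_mult_c[of k] by (simp add: algebra_simps)

lemma ind_dom:
  fixes S :: "(real^'n) set"
  assumes S: "S \<in> sets lebesgue" "S \<subseteq> cball 0 R"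
  shows "(\<lambda>k. complex_of_real (indicator S k)) \<in> mult_dom \<phi>"
proof (rule bdd_dom[OF _ S, of _ 1])
  show "(\<lambda>k. complex_of_real (indicator S k)) \<in> borel_measurable lebesgue" using S by measurable
qed (auto simp: indicator_def)

lemma not_dom:
  fixes p :: "real^'n \<Rightarrow> complex"
  assumes p: "p \<in> mult_dom \<phi>" and ae: "AE k in lebesgue. p k = c * of_real (ee \<phi> k)"
  shows "c = 0"
proof -
  have "(\<lambda>k::real^'n. c) \<in> L2"
  proof (rule L2_ae[OF dom_L2'[OF p]])
    show "(\<lambda>k::real^'n. c) \<in> borel_measurable lebesgue" by simp
    show "AE k in lebesgue. complex_of_real (1 + \<phi> (norm k)) * p k = c" using ae
    proof eventually_elim
      case (elim k)
      have "complex_of_real (1 + \<phi> (norm k)) * p k = c * ((1 + complex_of_real (\<phi> (norm k))) * complex_of_real (ee \<phi> k))"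
        using elim by (simp add: mult_ac)
      then show ?case by (simp only: ee_mult_c) simp
    qed
  qed
  then have "integrable (lebesgue :: (real^'n) measure) (\<lambda>k. (cmod c)\<^sup>2)" using L2_D(2) by fastforce
  then have "(cmod c)\<^sup>2 = 0" by (rule integrable_const_lebesgue)
  then show ?thesis by simp
qed

lemma mult_opD:
  assumes "(f, u) \<in> mult_op \<phi>"
  shows "f \<in> mult_dom \<phi>" "u \<in> L2" "AE k in lebesgue. u k = of_real (\<phi> (norm k)) * f k"
  using assms unfolding mult_op_def by auto

lemma mult_opI:
  assumes "f \<in> mult_dom \<phi>"
  shows "(f, \<lambda>k. of_real (\<phi> (norm k)) * f k) \<in> mult_op \<phi>"
  using assms dom_Phi[OF assms] unfolding mult_op_def by auto

lemma mult_op0I: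
  assumes "f \<in> mult_dom \<phi>" "integral\<^sup>L lebesgue f = 0"
  shows "(f, \<lambda>k. of_real (\<phi> (norm k)) * f k) \<in> mult_op0 \<phi>"
  using mult_opI[OF assms(1)] assms(2) unfolding mult_op0_def by auto

lemma mult_op0_sub: "mult_op0 \<phi> \<subseteq> mult_op \<phi>"
  unfolding mult_op0_def by auto

lemma adj0_const:
  fixes g h :: "real^'n \<Rightarrow> complex"
  assumes gh: "(g, h) \<in> adjoint_op (mult_op0 \<phi>)"
  shows "\<exists>\<kappa>. AE k in lebesgue. h k = of_real (\<phi> (norm k)) * g k + \<kappa>"
proof -
  have gL: "g \<in> L2" and hL: "h \<in> L2" using adjoint_L2[OF gh] by auto
  have [measurable]: "g \<in> borel_measurable lebesgue" "h \<in> borel_measurable lebesgue"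
    using gL hL by (auto dest: L2_D)
  define w where "w k = of_real (\<phi> (norm k)) * g k - h k" for k
  have [measurable]: "w \<in> borel_measurable lebesgue" unfolding w_def by measurable
  define B where "B = cball (0::real^'n) 1"
  define vB where "vB = measure lebesgue B"
  have vB: "vB > 0" unfolding vB_def B_def by (rule measure_lebesgue_cball_pos)
  have Bs: "B \<in> sets lebesgue" "B \<subseteq> cball 0 1" unfolding B_def by auto
  have intS: "integrable lebesgue (\<lambda>k. complex_of_real (F k) * (of_real (\<phi> (norm k)) * g k))"
     "integrable lebesgue (\<lambda>k. complex_of_real (F k) * h k)"
    if F: "(\<lambda>k. complex_of_real (F k)) \<in> mult_dom \<phi>" for F
  proof -
    have "integrable lebesgue (\<lambda>k. cnj (of_real (\<phi> (norm k)) * of_real (F k)) * g k)"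
      by (rule L2_prod_integrable[OF dom_Phi[OF F] gL])
    then show "integrable lebesgue (\<lambda>k. complex_of_real (F k) * (of_real (\<phi> (norm k)) * g k))"
      by (simp add: mult_ac)
    have "integrable lebesgue (\<lambda>k. cnj (of_real (F k)) * h k)"
      by (rule L2_prod_integrable[OF dom_L2[OF F] hL])
    then show "integrable lebesgue (\<lambda>k. complex_of_real (F k) * h k)"
      by simp
  qed
  have intw: "integrable lebesgue (\<lambda>k. complex_of_real (F k) * w k)"
    if F: "(\<lambda>k. complex_of_real (F k)) \<in> mult_dom \<phi>" for F
  proof -
    have "integrable lebesgue (\<lambda>k. complex_of_real (F k) * (of_real (\<phi> (norm k)) * g k) - complex_of_real (F k) * h k)"
      using intS[OF F] by (rule Bochner_Integration.integrable_diff)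
    then show ?thesis by (simp add: w_def right_diff_distrib)
  qed
  have int: "integrable lebesgue (\<lambda>k. indicator S k *\<^sub>R w k)"
    if S: "S \<in> sets lebesgue" "S \<subseteq> cball 0 R" for S R
    using intw[OF ind_dom[OF S]] by (simp add: scaleR_conv_of_real)
  have key: "vB *\<^sub>R (LINT k|lebesgue. indicator S k *\<^sub>R w k) =
      measure lebesgue S *\<^sub>R (LINT k|lebesgue. indicator B k *\<^sub>R w k)"
    if S: "S \<in> sets lebesgue" "S \<subseteq> cball 0 R" for S R
  proof -
    define F where "F k = vB * indicator S k - measure lebesgue S * indicator B k" for k
    define f where "f k = complex_of_real (F k)" for k
    have [measurable]: "S \<in> sets lebesgue" "B \<in> sets lebesgue" using S Bs by auto
    have [measurable]: "F \<in> borel_measurable lebesgue" unfolding F_def by measurable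
    have SB: "S \<union> B \<subseteq> cball 0 (max R 1)" using S Bs by (auto simp: subset_iff)
    have fd: "f \<in> mult_dom \<phi>"
    proof (rule bdd_dom[of f "S \<union> B" "max R 1" "vB + measure lebesgue S"])
      show "f \<in> borel_measurable lebesgue" unfolding f_def by measurable
      show "S \<union> B \<in> sets lebesgue" by measurable
      show "S \<union> B \<subseteq> cball 0 (max R 1)" by fact
      fix k
      have "cmod (f k) = \<bar>F k\<bar>" by (simp add: f_def)
      also have "\<dots> \<le> (vB + measure lebesgue S) * indicator (S \<union> B) k"
        using vB measure_nonneg[of lebesgue S] by (auto simp: F_def indicator_def abs_if)
      finally show "cmod (f k) \<le> (vB + measure lebesgue S) * indicator (S \<union> B) k" .
    qed
    have Sfin: "emeasure lebesgue S < \<infinity>" by (rule emeasure_lebesgue_bounded_finite[OF S])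
    have Bfin: "emeasure lebesgue B < \<infinity>" by (rule emeasure_lebesgue_bounded_finite[OF Bs])
    have intF: "integral\<^sup>L lebesgue F = 0"
    proof -
      have "integral\<^sup>L lebesgue F = vB * measure lebesgue S - measure lebesgue S * measure lebesgue B"
        unfolding F_def using Sfin Bfin by (simp add: Bochner_Integration.integral_diff)
      then show ?thesis by (simp add: vB_def)
    qed
    have "(f, \<lambda>k. of_real (\<phi> (norm k)) * f k) \<in> mult_op0 \<phi>"
      by (rule mult_op0I[OF fd]) (simp add: f_def[abs_def] intF)
    from adjointD[OF gh this] have "L2_inner (\<lambda>k. of_real (\<phi> (norm k)) * f k) g = L2_inner f h" .
    then have E: "(LINT k|lebesgue. complex_of_real (F k) * (of_real (\<phi> (norm k)) * g k)) =
        (LINT k|lebesgue. complex_of_real (F k) * h k)"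
      by (simp add: L2_inner_def f_def mult_ac)
    have "(LINT k|lebesgue. complex_of_real (F k) * w k) =
        (LINT k|lebesgue. complex_of_real (F k) * (of_real (\<phi> (norm k)) * g k) - complex_of_real (F k) * h k)"
      by (simp add: w_def right_diff_distrib)
    also have "\<dots> = 0" using E intS[OF fd[unfolded f_def]] by simp
    finally have Z: "(LINT k|lebesgue. complex_of_real (F k) * w k) = 0" .
    have "(\<lambda>k. complex_of_real (F k) * w k) =
        (\<lambda>k. vB *\<^sub>R (indicator S k *\<^sub>R w k) - measure lebesgue S *\<^sub>R (indicator B k *\<^sub>R w k))"
      by (auto simp: F_def scaleR_conv_of_real algebra_simps)
    with Z have Z2: "(LINT k|lebesgue. vB *\<^sub>R (indicator S k *\<^sub>R w k) - measure lebesgue S *\<^sub>R (indicator B k *\<^sub>R w k)) = 0"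
      by simp
    have i1: "integrable lebesgue (\<lambda>k. vB *\<^sub>R (indicator S k *\<^sub>R w k))"
      using int[OF S] by (rule integrable_scaleR_right)
    have i2: "integrable lebesgue (\<lambda>k. measure lebesgue S *\<^sub>R (indicator B k *\<^sub>R w k))"
      using int[OF Bs] by (rule integrable_scaleR_right)
    have "(LINT k|lebesgue. vB *\<^sub>R (indicator S k *\<^sub>R w k) - measure lebesgue S *\<^sub>R (indicator B k *\<^sub>R w k)) =
       (LINT k|lebesgue. vB *\<^sub>R (indicator S k *\<^sub>R w k)) - (LINT k|lebesgue. measure lebesgue S *\<^sub>R (indicator B k *\<^sub>R w k))"
      by (rule Bochner_Integration.integral_diff[OF i1 i2])
    also have "\<dots> = vB *\<^sub>R (LINT k|lebesgue. indicator S k *\<^sub>R w k) - measure lebesgue S *\<^sub>R (LINT k|lebesgue. indicator B k *\<^sub>R w k)"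
      by (simp only: integral_scaleR_right)
    finally show ?thesis using Z2 by simp
  qed
  define \<kappa> where "\<kappa> = (LINT k|lebesgue. indicator B k *\<^sub>R w k) /\<^sub>R vB"
  have "AE k in lebesgue. w k - \<kappa> = 0"
  proof (rule ae_zero_complex)
    show "(\<lambda>k. w k - \<kappa>) \<in> borel_measurable lebesgue" by measurable
    fix S :: "(real^'n) set" and R assume S: "S \<in> sets lebesgue" "S \<subseteq> cball 0 R"
    have Sfin: "emeasure lebesgue S < \<infinity>" by (rule emeasure_lebesgue_bounded_finite[OF S])
    have ik: "integrable lebesgue (\<lambda>k. indicator S k *\<^sub>R \<kappa>)"
      using S Sfin by (intro integrable_scaleR_left) auto
    have eq: "(\<lambda>k. indicator S k *\<^sub>R (w k - \<kappa>)) = (\<lambda>k. indicator S k *\<^sub>R w k - indicator S k *\<^sub>R \<kappa>)"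
      by (simp add: scaleR_diff_right)
    have "(LINT k|lebesgue. indicator S k *\<^sub>R w k) = measure lebesgue S *\<^sub>R \<kappa>"
    proof -
      have "(LINT k|lebesgue. indicator S k *\<^sub>R w k) = (1 / vB) *\<^sub>R (vB *\<^sub>R (LINT k|lebesgue. indicator S k *\<^sub>R w k))"
        using vB by simp
      also have "\<dots> = (1 / vB) *\<^sub>R (measure lebesgue S *\<^sub>R (LINT k|lebesgue. indicator B k *\<^sub>R w k))"
        by (simp only: key[OF S])
      also have "\<dots> = measure lebesgue S *\<^sub>R \<kappa>" unfolding \<kappa>_def by (simp add: divide_inverse_commute)
      finally show ?thesis .
    qed
    moreover have "(LINT k|lebesgue. indicator S k *\<^sub>R \<kappa>) = measure lebesgue S *\<^sub>R \<kappa>"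
      using S Sfin by simp
    ultimately show "integrable lebesgue (\<lambda>k. indicator S k *\<^sub>R (w k - \<kappa>)) \<and>
        (LINT k|lebesgue. indicator S k *\<^sub>R (w k - \<kappa>)) = 0"
      unfolding eq using int[OF S] ik by (simp add: Bochner_Integration.integral_diff)
  qed
  then show ?thesis
    by (intro exI[of _ "-\<kappa>"]) (auto simp: w_def elim!: eventually_mono)
qed

end

lemma Re_cnj_ofreal_mult: "Re (cnj z * (complex_of_real a * z)) = a * (cmod z)\<^sup>2"
proof -
  have "Re (cnj z * (complex_of_real a * z)) = a * ((Re z)\<^sup>2 + (Im z)\<^sup>2)"
    by (simp add: algebra_simps power2_eq_square)
  then show ?thesis by (simp only: cmod_power2)
qed

context phi_ctx begin

lemma is_op_A: "is_operator (mult_op \<phi> :: ((real^'n \<Rightarrow> complex) \<times> _) set)"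
proof -
  have sub: "mult_op \<phi> \<subseteq> L2 \<times> L2" using mult_opD dom_L2 by fast
  have sv: "AE k in lebesgue. u k = v k"
    if "(f, u) \<in> mult_op \<phi>" "(g, v) \<in> mult_op \<phi>" "AE k in lebesgue. f k = g k" for f u g v
    using mult_opD(3)[OF that(1)] mult_opD(3)[OF that(2)] that(3) by eventually_elim auto
  show ?thesis unfolding is_operator_def using sub sv by blast
qed

lemma A_sub_adj: "(mult_op \<phi> :: ((real^'n \<Rightarrow> complex) \<times> _) set) \<subseteq> adjoint_op (mult_op \<phi>)"
proof (safe)
  fix g h :: "real^'n \<Rightarrow> complex" assume gh: "(g, h) \<in> mult_op \<phi>"
  note g = mult_opD[OF gh]
  show "(g, h) \<in> adjoint_op (mult_op \<phi>)" unfolding adjoint_op_def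
  proof (safe)
    show "g \<in> L2" "h \<in> L2" using g dom_L2 by auto
    fix f u :: "real^'n \<Rightarrow> complex" assume fu: "(f, u) \<in> mult_op \<phi>"
    note f = mult_opD[OF fu]
    have "L2_inner u g = L2_inner (\<lambda>k. of_real (\<phi> (norm k)) * f k) g"
      by (rule L2_inner_cong) (use f g dom_L2 dom_Phi in auto)
    also have "\<dots> = L2_inner f (\<lambda>k. of_real (\<phi> (norm k)) * g k)"
      unfolding L2_inner_def by (simp add: mult_ac)
    also have "\<dots> = L2_inner f h"
      by (rule L2_inner_cong) (use f g dom_L2 dom_Phi in \<open>auto elim: eventually_mono\<close>)
    finally show "L2_inner u g = L2_inner f h" .
  qed
qed

lemma adj_sub_A: "adjoint_op (mult_op \<phi>) \<subseteq> (mult_op \<phi> :: ((real^'n \<Rightarrow> complex) \<times> _) set)"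
proof safe
  fix g h :: "real^'n \<Rightarrow> complex"
  assume gh: "(g, h) \<in> adjoint_op (mult_op \<phi>)"
  have gh0: "(g, h) \<in> adjoint_op (mult_op0 \<phi>)" using adjoint_antimono[OF mult_op0_sub] gh by auto
  obtain \<kappa> where \<kappa>: "AE k in lebesgue. h k = of_real (\<phi> (norm k)) * g k + \<kappa>"
    using adj0_const[OF gh0] by blast
  have gL: "g \<in> L2" and hL: "h \<in> L2" using adjoint_L2[OF gh] by auto
  have [measurable]: "g \<in> borel_measurable lebesgue" "h \<in> borel_measurable lebesgue"
    using gL hL by (auto dest: L2_D)
  define B where "B = cball (0::real^'n) 1"
  have vB: "measure lebesgue B > 0" unfolding B_def by (rule measure_lebesgue_cball_pos)
  have Bs: "B \<in> sets lebesgue" "B \<subseteq> cball 0 1" unfolding B_def by auto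
  have Bfin: "emeasure lebesgue B < \<infinity>" by (rule emeasure_lebesgue_bounded_finite[OF Bs])
  define f where "f = (\<lambda>k. complex_of_real (indicator B k))"
  have fd: "f \<in> mult_dom \<phi>" unfolding f_def by (rule ind_dom[OF Bs])
  from adjointD[OF gh mult_opI[OF fd]]
  have E: "(LINT k|lebesgue. f k * (of_real (\<phi> (norm k)) * g k)) = (LINT k|lebesgue. f k * h k)"
    by (simp add: L2_inner_def f_def mult_ac)
  have i1: "integrable lebesgue (\<lambda>k. f k * (of_real (\<phi> (norm k)) * g k))"
  proof -
    have "integrable lebesgue (\<lambda>k. cnj (of_real (\<phi> (norm k)) * f k) * g k)"
      by (rule L2_prod_integrable[OF dom_Phi[OF fd] gL])
    then show ?thesis by (simp add: f_def mult_ac)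
  qed
  have i2: "integrable lebesgue (\<lambda>k. indicator B k *\<^sub>R \<kappa>)"
    using Bs Bfin by (intro integrable_scaleR_left) auto
  have "(LINT k|lebesgue. f k * h k) = (LINT k|lebesgue. f k * (of_real (\<phi> (norm k)) * g k) + indicator B k *\<^sub>R \<kappa>)"
  proof (rule integral_cong_AE)
    show "(\<lambda>k. f k * h k) \<in> borel_measurable lebesgue" unfolding f_def using Bs by measurable
    show "(\<lambda>k. f k * (complex_of_real (\<phi> (norm k)) * g k) + indicator B k *\<^sub>R \<kappa>) \<in> borel_measurable lebesgue"
      unfolding f_def using Bs by measurable
    show "AE k in lebesgue. f k * h k = f k * (complex_of_real (\<phi> (norm k)) * g k) + indicator B k *\<^sub>R \<kappa>"
      using \<kappa> by eventually_elim (simp add: f_def scaleR_conv_of_real algebra_simps)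
  qed
  also have "\<dots> = (LINT k|lebesgue. f k * (of_real (\<phi> (norm k)) * g k)) + measure lebesgue B *\<^sub>R \<kappa>"
    using i1 i2 Bs Bfin by simp
  finally have "measure lebesgue B *\<^sub>R \<kappa> = 0" using E by simp
  then have k0: "\<kappa> = 0" using vB by simp
  have hA: "AE k in lebesgue. h k = of_real (\<phi> (norm k)) * g k" using \<kappa> k0 by simp
  have gd: "g \<in> mult_dom \<phi>"
  proof (rule dom_intro[OF gL])
    show "(\<lambda>k. complex_of_real (1 + \<phi> (norm k)) * g k) \<in> L2"
    proof (rule L2_ae[OF L2_add[OF gL hL]])
      show "(\<lambda>k. complex_of_real (1 + \<phi> (norm k)) * g k) \<in> borel_measurable lebesgue" by measurable
      show "AE k in lebesgue. g k + h k = complex_of_real (1 + \<phi> (norm k)) * g k"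
        using hA by eventually_elim (simp add: algebra_simps)
    qed
  qed
  show "(g, h) \<in> mult_op \<phi>" unfolding mult_op_def using gd hL hA by auto
qed

lemma A_sa: "self_adjoint_op (mult_op \<phi> :: ((real^'n \<Rightarrow> complex) \<times> _) set)"
  unfolding self_adjoint_op_def using is_op_A A_sub_adj adj_sub_A by auto

lemma A_nonneg: "nonneg_op (mult_op \<phi> :: ((real^'n \<Rightarrow> complex) \<times> _) set)"
  unfolding nonneg_op_def
proof safe
  fix f u :: "real^'n \<Rightarrow> complex" assume fu: "(f, u) \<in> mult_op \<phi>"
  note fm = mult_opD[OF fu]
  have "L2_inner f u = L2_inner f (\<lambda>k. of_real (\<phi> (norm k)) * f k)"
    by (rule L2_inner_cong) (use fm dom_L2 dom_Phi in auto)
  also have "Re \<dots> = (LINT k|lebesgue. \<phi> (norm k) * (cmod (f k))\<^sup>2)"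
  proof -
    have i: "integrable lebesgue (\<lambda>k. cnj (f k) * (complex_of_real (\<phi> (norm k)) * f k))"
      by (rule L2_prod_integrable[OF dom_L2[OF fm(1)] dom_Phi[OF fm(1)]])
    have "Re (L2_inner f (\<lambda>k. of_real (\<phi> (norm k)) * f k)) = (LINT k|lebesgue. Re (cnj (f k) * (complex_of_real (\<phi> (norm k)) * f k)))"
      unfolding L2_inner_def by (rule integral_Re[OF i, symmetric])
    also have "\<dots> = (LINT k|lebesgue. \<phi> (norm k) * (cmod (f k))\<^sup>2)"
      by (simp only: Re_cnj_ofreal_mult)
    finally show ?thesis .
  qed
  also have "\<dots> \<ge> 0" by (intro integral_nonneg_AE AE_I2) (simp add: Phi_nonneg)
  finally show "0 \<le> Re (L2_inner f u)" .
qed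

end

definition Tth :: "(real \<Rightarrow> real) \<Rightarrow> real \<Rightarrow> ((real^'n \<Rightarrow> complex) \<times> (real^'n \<Rightarrow> complex)) set" where
  "Tth \<phi> \<theta> = {(g, h). g \<in> L2 \<and> h \<in> L2 \<and> (\<exists>g0 c. g0 \<in> mult_dom \<phi> \<and> integral\<^sup>L lebesgue g0 = complex_of_real \<theta> * c \<and>
     (AE k in lebesgue. g k = g0 k + c * of_real (ee \<phi> k)) \<and>
     (AE k in lebesgue. h k = of_real (\<phi> (norm k)) * g0 k - c * of_real (ee \<phi> k)))}"

lemma bf_alg:
  fixes P E f g c d :: complex
  assumes "(1 + P) * E = 1"
  shows "(P * f - d * E) * (g + c * E) - (f + d * E) * (P * g - c * E) = c * f - d * g"
proof -
  have "(P * f - d * E) * (g + c * E) - (f + d * E) * (P * g - c * E) = c * f * ((1 + P) * E) - d * g * ((1 + P) * E)"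
    by (simp add: algebra_simps)
  then show ?thesis using assms by simp
qed

locale phi_ctx2 = phi_ctx +
  assumes eL2: "integrable lebesgue (\<lambda>k::real^'n. (ee \<phi> k)\<^sup>2)"
begin

lemma e_L2: "(\<lambda>k::real^'n. complex_of_real (ee \<phi> k)) \<in> L2"
  by (rule L2_I) (use eL2 in \<open>auto simp: ee_pos less_imp_le\<close>)

lemma ce_L2: "(\<lambda>k::real^'n. c * complex_of_real (ee \<phi> k)) \<in> L2"
  using L2_scale[OF e_L2] .

lemma L2_c1: "f0 \<in> mult_dom \<phi> \<Longrightarrow> (\<lambda>k::real^'n. of_real (\<phi> (norm k)) * f0 k - d * of_real (ee \<phi> k)) \<in> L2"
  by (rule L2_diff[OF dom_Phi ce_L2])

lemma L2_c2: "f0 \<in> mult_dom \<phi> \<Longrightarrow> (\<lambda>k::real^'n. f0 k + d * of_real (ee \<phi> k)) \<in> L2"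
  by (rule L2_add[OF dom_L2 ce_L2])

lemma L2_c1': "f0 \<in> mult_dom \<phi> \<Longrightarrow> (\<lambda>k::real^'n. of_real (\<phi> (norm k)) * f0 k - of_real (ee \<phi> k)) \<in> L2"
  using L2_c1[of f0 1] by simp

lemma L2_c2': "f0 \<in> mult_dom \<phi> \<Longrightarrow> (\<lambda>k::real^'n. f0 k + of_real (ee \<phi> k)) \<in> L2"
  using L2_c2[of f0 1] by simp

lemma dom_L1:
  fixes f :: "real^'n \<Rightarrow> complex"
  assumes f: "f \<in> mult_dom \<phi>"
  shows "integrable lebesgue f"
proof -
  have "integrable lebesgue (\<lambda>k. ((cmod (of_real (1 + \<phi> (norm k)) * f k))\<^sup>2 + (ee \<phi> k)\<^sup>2) / 2)"
    using L2_D(2)[OF dom_L2'[OF f]] eL2 by simp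
  then show ?thesis
  proof (rule Bochner_Integration.integrable_bound)
    show "f \<in> borel_measurable lebesgue" using f by (rule dom_meas)
    show "AE k in lebesgue. norm (f k) \<le> norm (((cmod (of_real (1 + \<phi> (norm k)) * f k))\<^sup>2 + (ee \<phi> k)\<^sup>2) / 2)"
    proof (intro AE_I2)
      fix k :: "real^'n"
      define a where "a = (1 + \<phi> (norm k)) * cmod (f k)"
      define b where "b = ee \<phi> k"
      have ab: "cmod (f k) = a * b" unfolding a_def b_def
        using ee_mult[of k] by (metis mult.commute mult.left_commute mult_1)
      have "a * b \<le> (a\<^sup>2 + b\<^sup>2) / 2"
        using zero_le_power2[of "a - b"] by (simp add: power2_eq_square algebra_simps)
      moreover have "(cmod (of_real (1 + \<phi> (norm k)) * f k))\<^sup>2 = a\<^sup>2"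
        unfolding a_def using Phi_nonneg[of k] by (simp add: norm_mult)
      ultimately show "norm (f k) \<le> norm (((cmod (of_real (1 + \<phi> (norm k)) * f k))\<^sup>2 + (ee \<phi> k)\<^sup>2) / 2)"
        using ab unfolding b_def by simp
    qed
  qed
qed

lemma bform:
  fixes f0 g0 :: "real^'n \<Rightarrow> complex"
  assumes f0: "f0 \<in> mult_dom \<phi>" and g0: "g0 \<in> mult_dom \<phi>"
  shows "L2_inner (\<lambda>k. of_real (\<phi> (norm k)) * f0 k - d * of_real (ee \<phi> k)) (\<lambda>k. g0 k + c * of_real (ee \<phi> k))
       - L2_inner (\<lambda>k. f0 k + d * of_real (ee \<phi> k)) (\<lambda>k. of_real (\<phi> (norm k)) * g0 k - c * of_real (ee \<phi> k))
       = c * cnj (integral\<^sup>L lebesgue f0) - cnj d * integral\<^sup>L lebesgue g0"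
proof -
  have L: "(\<lambda>k. of_real (\<phi> (norm k)) * f0 k - d * of_real (ee \<phi> k)) \<in> L2"
    "(\<lambda>k. g0 k + c * of_real (ee \<phi> k)) \<in> L2"
    "(\<lambda>k. f0 k + d * of_real (ee \<phi> k)) \<in> L2"
    "(\<lambda>k. of_real (\<phi> (norm k)) * g0 k - c * of_real (ee \<phi> k)) \<in> L2"
    using f0 g0 by (auto intro!: L2_c1 L2_c2 L2_c1' L2_c2')
  have i1: "integrable lebesgue (\<lambda>k. cnj (of_real (\<phi> (norm k)) * f0 k - d * of_real (ee \<phi> k)) * (g0 k + c * of_real (ee \<phi> k)))"
    using L(1,2) by (rule L2_prod_integrable)
  have i2: "integrable lebesgue (\<lambda>k. cnj (f0 k + d * of_real (ee \<phi> k)) * (of_real (\<phi> (norm k)) * g0 k - c * of_real (ee \<phi> k)))"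
    using L(3,4) by (rule L2_prod_integrable)
  have pw: "cnj (of_real (\<phi> (norm k)) * f0 k - d * of_real (ee \<phi> k)) * (g0 k + c * of_real (ee \<phi> k))
      - cnj (f0 k + d * of_real (ee \<phi> k)) * (of_real (\<phi> (norm k)) * g0 k - c * of_real (ee \<phi> k))
      = c * cnj (f0 k) - cnj d * g0 k" for k
    using bf_alg[OF ee_mult_c[of k], of "cnj (f0 k)" "cnj d" "g0 k" c] by simp
  have "L2_inner (\<lambda>k. of_real (\<phi> (norm k)) * f0 k - d * of_real (ee \<phi> k)) (\<lambda>k. g0 k + c * of_real (ee \<phi> k))
       - L2_inner (\<lambda>k. f0 k + d * of_real (ee \<phi> k)) (\<lambda>k. of_real (\<phi> (norm k)) * g0 k - c * of_real (ee \<phi> k))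
      = (LINT k|lebesgue. c * cnj (f0 k) - cnj d * g0 k)"
    unfolding L2_inner_def pw[symmetric] by (rule Bochner_Integration.integral_diff[OF i1 i2, symmetric])
  also have "\<dots> = c * cnj (integral\<^sup>L lebesgue f0) - cnj d * integral\<^sup>L lebesgue g0"
    using dom_L1[OF f0] dom_L1[OF g0] by simp
  finally show ?thesis .
qed

lemma TthI:
  fixes g0 :: "real^'n \<Rightarrow> complex"
  assumes g0: "g0 \<in> mult_dom \<phi>" and i: "integral\<^sup>L lebesgue g0 = complex_of_real \<theta> * c"
  shows "(\<lambda>k. g0 k + c * of_real (ee \<phi> k), \<lambda>k. of_real (\<phi> (norm k)) * g0 k - c * of_real (ee \<phi> k)) \<in> Tth \<phi> \<theta>"
  unfolding Tth_def using g0 i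
  by (auto intro!: L2_c1 L2_c2 L2_c1' L2_c2' exI[of _ g0] exI[of _ c])

lemma TthE:
  assumes "(g, h) \<in> Tth \<phi> \<theta>"
  obtains g0 c where "g \<in> L2" "h \<in> L2" "g0 \<in> mult_dom \<phi>" "integral\<^sup>L lebesgue g0 = complex_of_real \<theta> * c"
    "AE k in lebesgue. g k = g0 k + c * of_real (ee \<phi> k)"
    "AE k in lebesgue. h k = of_real (\<phi> (norm k)) * g0 k - c * of_real (ee \<phi> k)"
  using assms unfolding Tth_def by auto

lemma Tth_L2: "Tth \<phi> \<theta> \<subseteq> L2 \<times> L2"
  unfolding Tth_def by auto

lemma A0_sub_Tth: "mult_op0 \<phi> \<subseteq> (Tth \<phi> \<theta> :: ((real^'n \<Rightarrow> complex) \<times> _) set)"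
proof safe
  fix f u :: "real^'n \<Rightarrow> complex" assume fu: "(f, u) \<in> mult_op0 \<phi>"
  then have fu': "(f, u) \<in> mult_op \<phi>" and i: "integral\<^sup>L lebesgue f = 0" unfolding mult_op0_def by auto
  note m = mult_opD[OF fu']
  show "(f, u) \<in> Tth \<phi> \<theta>" unfolding Tth_def
    using m i dom_L2 by (auto intro!: exI[of _ f] exI[of _ 0])
qed

lemma exists_int:
  "\<exists>q::real^'n \<Rightarrow> complex. q \<in> mult_dom \<phi> \<and> integral\<^sup>L lebesgue q = z"
proof -
  define B where "B = cball (0::real^'n) 1"
  have vB: "measure lebesgue B > 0" unfolding B_def by (rule measure_lebesgue_cball_pos)
  have Bs: "B \<in> sets lebesgue" "B \<subseteq> cball 0 1" unfolding B_def by auto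
  have Bfin: "emeasure lebesgue B < \<infinity>" by (rule emeasure_lebesgue_bounded_finite[OF Bs])
  define q where "q = (\<lambda>k. (z / of_real (measure lebesgue B)) * complex_of_real (indicator B k))"
  have "q \<in> mult_dom \<phi>" unfolding q_def by (rule dom_scale[OF ind_dom[OF Bs]])
  moreover have "integral\<^sup>L lebesgue q = z"
    unfolding q_def using vB Bs Bfin by simp
  ultimately show ?thesis by blast
qed

lemma Tth_sub_adj: "Tth \<phi> \<theta> \<subseteq> adjoint_op (Tth \<phi> \<theta> :: ((real^'n \<Rightarrow> complex) \<times> _) set)"
proof safe
  fix g h :: "real^'n \<Rightarrow> complex" assume gh: "(g, h) \<in> Tth \<phi> \<theta>"
  obtain g0 c where g: "g \<in> L2" "h \<in> L2" "g0 \<in> mult_dom \<phi>" "integral\<^sup>L lebesgue g0 = complex_of_real \<theta> * c"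
    "AE k in lebesgue. g k = g0 k + c * of_real (ee \<phi> k)"
    "AE k in lebesgue. h k = of_real (\<phi> (norm k)) * g0 k - c * of_real (ee \<phi> k)"
    using TthE[OF gh] by blast
  show "(g, h) \<in> adjoint_op (Tth \<phi> \<theta>)" unfolding adjoint_op_def
  proof (safe)
    show "g \<in> L2" "h \<in> L2" by fact+
    fix f u :: "real^'n \<Rightarrow> complex" assume fu: "(f, u) \<in> Tth \<phi> \<theta>"
    obtain f0 d where f: "f \<in> L2" "u \<in> L2" "f0 \<in> mult_dom \<phi>" "integral\<^sup>L lebesgue f0 = complex_of_real \<theta> * d"
      "AE k in lebesgue. f k = f0 k + d * of_real (ee \<phi> k)"
      "AE k in lebesgue. u k = of_real (\<phi> (norm k)) * f0 k - d * of_real (ee \<phi> k)"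
      using TthE[OF fu] by blast
    have "L2_inner u g = L2_inner (\<lambda>k. of_real (\<phi> (norm k)) * f0 k - d * of_real (ee \<phi> k)) (\<lambda>k. g0 k + c * of_real (ee \<phi> k))"
      by (rule L2_inner_cong) (use f g in \<open>auto intro!: L2_c1 L2_c2 L2_c1' L2_c2'\<close>)
    moreover have "L2_inner f h = L2_inner (\<lambda>k. f0 k + d * of_real (ee \<phi> k)) (\<lambda>k. of_real (\<phi> (norm k)) * g0 k - c * of_real (ee \<phi> k))"
      by (rule L2_inner_cong) (use f g in \<open>auto intro!: L2_c1 L2_c2 L2_c1' L2_c2'\<close>)
    moreover note bform[OF f(3) g(3), of d c]
    ultimately show "L2_inner u g = L2_inner f h" using f(4) g(4) by (simp add: algebra_simps)
  qed
qed

lemma adj_sub_Tth: "adjoint_op (Tth \<phi> \<theta>) \<subseteq> (Tth \<phi> \<theta> :: ((real^'n \<Rightarrow> complex) \<times> _) set)"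
proof safe
  fix g h :: "real^'n \<Rightarrow> complex" assume gh: "(g, h) \<in> adjoint_op (Tth \<phi> \<theta>)"
  have gh0: "(g, h) \<in> adjoint_op (mult_op0 \<phi>)" using adjoint_antimono[OF A0_sub_Tth] gh by auto
  obtain \<kappa> where \<kappa>: "AE k in lebesgue. h k = of_real (\<phi> (norm k)) * g k + \<kappa>"
    using adj0_const[OF gh0] by blast
  have gL: "g \<in> L2" and hL: "h \<in> L2" using adjoint_L2[OF gh] by auto
  have [measurable]: "g \<in> borel_measurable lebesgue" "h \<in> borel_measurable lebesgue"
    using gL hL by (auto dest: L2_D)
  define g0 where "g0 = (\<lambda>k. g k + \<kappa> * of_real (ee \<phi> k))"
  define c where "c = - \<kappa>"
  have g0L: "g0 \<in> L2" unfolding g0_def by (intro L2_add gL ce_L2)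
  have g0d: "g0 \<in> mult_dom \<phi>"
  proof (rule dom_intro[OF g0L])
    show "(\<lambda>k. complex_of_real (1 + \<phi> (norm k)) * g0 k) \<in> L2"
    proof (rule L2_ae[OF L2_add[OF gL hL]])
      show "(\<lambda>k. complex_of_real (1 + \<phi> (norm k)) * g0 k) \<in> borel_measurable lebesgue"
        unfolding g0_def by measurable
      show "AE k in lebesgue. g k + h k = complex_of_real (1 + \<phi> (norm k)) * g0 k"
        using \<kappa>
      proof eventually_elim
        case (elim k)
        have "complex_of_real (1 + \<phi> (norm k)) * g0 k = (1 + of_real (\<phi> (norm k))) * g k + \<kappa> * ((1 + of_real (\<phi> (norm k))) * of_real (ee \<phi> k))"
          unfolding g0_def by (simp add: algebra_simps)
        also have "\<dots> = g k + h k" using elim by (simp only: ee_mult_c) (simp add: algebra_simps)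
        finally show ?case by simp
      qed
    qed
  qed
  have ag: "AE k in lebesgue. g k = g0 k + c * of_real (ee \<phi> k)"
    unfolding g0_def c_def by simp
  have ah: "AE k in lebesgue. h k = of_real (\<phi> (norm k)) * g0 k - c * of_real (ee \<phi> k)"
    using \<kappa>
  proof eventually_elim
    case (elim k)
    have "of_real (\<phi> (norm k)) * g0 k - c * of_real (ee \<phi> k) = of_real (\<phi> (norm k)) * g k + \<kappa> * ((1 + of_real (\<phi> (norm k))) * of_real (ee \<phi> k))"
      unfolding g0_def c_def by (simp add: algebra_simps)
    also have "\<dots> = h k" using elim by (simp only: ee_mult_c) simp
    finally show ?case by simp
  qed
  obtain q :: "real^'n \<Rightarrow> complex" where q: "q \<in> mult_dom \<phi>" "integral\<^sup>L lebesgue q = complex_of_real \<theta>"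
    using exists_int by blast
  have qT: "(\<lambda>k. q k + 1 * of_real (ee \<phi> k), \<lambda>k. of_real (\<phi> (norm k)) * q k - 1 * of_real (ee \<phi> k)) \<in> Tth \<phi> \<theta>"
    by (rule TthI[OF q(1)]) (simp add: q(2))
  from adjointD[OF gh qT]
  have E: "L2_inner (\<lambda>k. of_real (\<phi> (norm k)) * q k - 1 * of_real (ee \<phi> k)) g = L2_inner (\<lambda>k. q k + 1 * of_real (ee \<phi> k)) h" .
  have "L2_inner (\<lambda>k. of_real (\<phi> (norm k)) * q k - 1 * of_real (ee \<phi> k)) g =
      L2_inner (\<lambda>k. of_real (\<phi> (norm k)) * q k - 1 * of_real (ee \<phi> k)) (\<lambda>k. g0 k + c * of_real (ee \<phi> k))"
    by (rule L2_inner_cong) (use q g0d gL ag in \<open>auto intro!: L2_c1 L2_c2 L2_c1' L2_c2'\<close>)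
  moreover have "L2_inner (\<lambda>k. q k + 1 * of_real (ee \<phi> k)) h =
      L2_inner (\<lambda>k. q k + 1 * of_real (ee \<phi> k)) (\<lambda>k. of_real (\<phi> (norm k)) * g0 k - c * of_real (ee \<phi> k))"
    by (rule L2_inner_cong) (use q g0d hL ah in \<open>auto intro!: L2_c1 L2_c2 L2_c1' L2_c2'\<close>)
  moreover note bform[OF q(1) g0d, of 1 c]
  ultimately have "c * cnj (integral\<^sup>L lebesgue q) - cnj 1 * integral\<^sup>L lebesgue g0 = 0" using E by simp
  then have ig: "integral\<^sup>L lebesgue g0 = complex_of_real \<theta> * c" using q(2) by (simp add: mult.commute)
  show "(g, h) \<in> Tth \<phi> \<theta>" unfolding Tth_def using gL hL g0d ig ag ah by blast
qed

lemma is_op_Tth_sv: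
  fixes g h g' h' :: "real^'n \<Rightarrow> complex"
  assumes gh: "(g, h) \<in> Tth \<phi> \<theta>" and gh': "(g', h') \<in> Tth \<phi> \<theta>" and ae: "AE k in lebesgue. g k = g' k"
  shows "AE k in lebesgue. h k = h' k"
proof -
  obtain g0 c where g: "g \<in> L2" "h \<in> L2" "g0 \<in> mult_dom \<phi>" "integral\<^sup>L lebesgue g0 = complex_of_real \<theta> * c"
    "AE k in lebesgue. g k = g0 k + c * of_real (ee \<phi> k)"
    "AE k in lebesgue. h k = of_real (\<phi> (norm k)) * g0 k - c * of_real (ee \<phi> k)"
    using TthE[OF gh] by blast
  obtain g0' c' where g': "g' \<in> L2" "h' \<in> L2" "g0' \<in> mult_dom \<phi>" "integral\<^sup>L lebesgue g0' = complex_of_real \<theta> * c'"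
    "AE k in lebesgue. g' k = g0' k + c' * of_real (ee \<phi> k)"
    "AE k in lebesgue. h' k = of_real (\<phi> (norm k)) * g0' k - c' * of_real (ee \<phi> k)"
    using TthE[OF gh'] by blast
  have "AE k in lebesgue. g0 k - g0' k = (c' - c) * of_real (ee \<phi> k)"
    using ae g(5) g'(5) by eventually_elim (simp add: algebra_simps)
  then have "c' - c = 0" by (rule not_dom[OF dom_diff[OF g(3) g'(3)]])
  then have cc: "c' = c" by simp
  have "AE k in lebesgue. g0 k = g0' k"
    using ae g(5) g'(5) by eventually_elim (simp add: cc)
  then show "AE k in lebesgue. h k = h' k"
    using g(6) g'(6) by eventually_elim (simp add: cc)
qed

lemma is_op_Tth: "is_operator (Tth \<phi> \<theta> :: ((real^'n \<Rightarrow> complex) \<times> _) set)"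
  unfolding is_operator_def using Tth_L2 is_op_Tth_sv by blast

lemma Tth_sa: "self_adjoint_op (Tth \<phi> \<theta> :: ((real^'n \<Rightarrow> complex) \<times> _) set)"
  unfolding self_adjoint_op_def by (intro conjI is_op_Tth equalityI Tth_sub_adj adj_sub_Tth)

lemma Tth_ne_A: "Tth \<phi> \<theta> \<noteq> (mult_op \<phi> :: ((real^'n \<Rightarrow> complex) \<times> _) set)"
proof
  assume eq: "Tth \<phi> \<theta> = (mult_op \<phi> :: ((real^'n \<Rightarrow> complex) \<times> _) set)"
  obtain q :: "real^'n \<Rightarrow> complex" where q: "q \<in> mult_dom \<phi>" "integral\<^sup>L lebesgue q = complex_of_real \<theta>"
    using exists_int by blast
  have qT: "(\<lambda>k. q k + 1 * of_real (ee \<phi> k), \<lambda>k. of_real (\<phi> (norm k)) * q k - 1 * of_real (ee \<phi> k)) \<in> Tth \<phi> \<theta>"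
    by (rule TthI[OF q(1)]) (simp add: q(2))
  then have "(\<lambda>k. q k + 1 * of_real (ee \<phi> k)) \<in> mult_dom \<phi>" using eq mult_opD by blast
  from dom_diff[OF this q(1)] have "(\<lambda>k. q k + 1 * of_real (ee \<phi> k) - q k) \<in> mult_dom \<phi>" .
  then have "(1::complex) = 0" by (rule not_dom) simp
  then show False by simp
qed

end

lemma Re_cnj_mult: "Re (cnj a * b) = Re a * Re b + Im a * Im b"
  by simp

lemma ineq_a:
  fixes P E :: real and z :: complex
  assumes PE: "(1 + P) * E = 1" and P: "0 \<le> P"
  shows "- Re z - E \<le> Re (cnj (z + of_real E) * (of_real P * z - of_real E))"
proof -
  define x where "x = Re z"
  define y where "y = Im z"
  define R where "R = Re (cnj (z + of_real E) * (of_real P * z - of_real E))"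
  have R: "R = (x + E) * (P * x - E) + y * (P * y)"
    unfolding R_def x_def y_def by simp
  have "R + x + E = P * ((x + E)\<^sup>2 + y\<^sup>2) + (x + E) * (1 - (1 + P) * E)"
    unfolding R by (simp add: algebra_simps power2_eq_square)
  also have "\<dots> = P * ((x + E)\<^sup>2 + y\<^sup>2)" using PE by simp
  also have "\<dots> \<ge> 0" using P by simp
  finally have "R + x + E \<ge> 0" .
  then show ?thesis unfolding R_def x_def by simp
qed

lemma ineq_b:
  fixes P E :: real and z :: complex
  assumes PE: "(1 + P) * E = 1" and P: "0 < P"
  shows "Re z - E / P \<le> Re (cnj (z + of_real E) * (of_real P * z - of_real E))"
proof -
  define x where "x = Re z"
  define y where "y = Im z"
  define R where "R = Re (cnj (z + of_real E) * (of_real P * z - of_real E))"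
  have R: "R = (x + E) * (P * x - E) + y * (P * y)"
    unfolding R_def x_def y_def by simp
  have "P * (R - x + E / P) = P * ((x + E) * (P * x - E) + y * (P * y) - x) + E"
    unfolding R using P by (simp add: algebra_simps)
  also have "\<dots> = (P * x - E)\<^sup>2 + P\<^sup>2 * y\<^sup>2 + (P * x - E) * ((1 + P) * E - 1)"
    by (simp add: algebra_simps power2_eq_square)
  also have "\<dots> = (P * x - E)\<^sup>2 + P\<^sup>2 * y\<^sup>2" using PE by simp
  also have "\<dots> \<ge> 0" by simp
  finally have "P * (R - x + E / P) \<ge> 0" .
  then have "R - x + E / P \<ge> 0" using P by (simp add: zero_le_mult_iff)
  then show ?thesis unfolding R_def x_def by simp
qed

context phi_ctx2 begin

lemma Tth_nonneg_gen:
  fixes w :: "real^'n \<Rightarrow> real" and s \<theta> :: real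
  assumes w: "integrable lebesgue w"
    and ineq: "AE k in lebesgue. \<forall>z. s * Re z - w k \<le> Re (cnj (z + of_real (ee \<phi> k)) * (of_real (\<phi> (norm k)) * z - of_real (ee \<phi> k)))"
    and th: "s * \<theta> = integral\<^sup>L lebesgue w"
  shows "nonneg_op (Tth \<phi> \<theta> :: ((real^'n \<Rightarrow> complex) \<times> _) set)"
  unfolding nonneg_op_def
proof safe
  fix g h :: "real^'n \<Rightarrow> complex" assume gh: "(g, h) \<in> Tth \<phi> \<theta>"
  obtain g0 c where g: "g \<in> L2" "h \<in> L2" "g0 \<in> mult_dom \<phi>" "integral\<^sup>L lebesgue g0 = complex_of_real \<theta> * c"
    "AE k in lebesgue. g k = g0 k + c * of_real (ee \<phi> k)"
    "AE k in lebesgue. h k = of_real (\<phi> (norm k)) * g0 k - c * of_real (ee \<phi> k)"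
    using TthE[OF gh] by blast
  have "L2_inner g h = L2_inner (\<lambda>k. g0 k + c * of_real (ee \<phi> k)) (\<lambda>k. of_real (\<phi> (norm k)) * g0 k - c * of_real (ee \<phi> k))"
    by (rule L2_inner_cong) (use g in \<open>auto intro!: L2_c1 L2_c2\<close>)
  also have "0 \<le> Re \<dots>"
  proof (cases "c = 0")
    case True
    have "(g0, \<lambda>k. of_real (\<phi> (norm k)) * g0 k) \<in> mult_op \<phi>" by (rule mult_opI[OF g(3)])
    then have "0 \<le> Re (L2_inner g0 (\<lambda>k. of_real (\<phi> (norm k)) * g0 k))"
      using A_nonneg unfolding nonneg_op_def by blast
    then show ?thesis using True by simp
  next
    case False
    define p where "p = (\<lambda>k. inverse c * g0 k)"
    have pd: "p \<in> mult_dom \<phi>" unfolding p_def by (rule dom_scale[OF g(3)])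
    have ip: "integral\<^sup>L lebesgue p = complex_of_real \<theta>"
      unfolding p_def using g(4) False by simp
    define X where "X = (\<lambda>k. cnj (p k + of_real (ee \<phi> k)) * (of_real (\<phi> (norm k)) * p k - of_real (ee \<phi> k)))"
    have iX: "integrable lebesgue X"
      unfolding X_def by (rule L2_prod_integrable[OF L2_c2'[OF pd] L2_c1'[OF pd]])
    have pw: "cnj (g0 k + c * of_real (ee \<phi> k)) * (of_real (\<phi> (norm k)) * g0 k - c * of_real (ee \<phi> k))
        = complex_of_real ((cmod c)\<^sup>2) * X k" for k
    proof -
      have g0k: "g0 k = c * p k" unfolding p_def using False by simp
      have "cnj (g0 k + c * of_real (ee \<phi> k)) * (of_real (\<phi> (norm k)) * g0 k - c * of_real (ee \<phi> k))
          = (cnj c * c) * X k"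
        unfolding g0k X_def by (simp add: algebra_simps)
      also have "cnj c * c = complex_of_real ((cmod c)\<^sup>2)"
        by (metis complex_norm_square mult.commute)
      finally show ?thesis .
    qed
    have "Re (L2_inner (\<lambda>k. g0 k + c * of_real (ee \<phi> k)) (\<lambda>k. of_real (\<phi> (norm k)) * g0 k - c * of_real (ee \<phi> k)))
        = Re (complex_of_real ((cmod c)\<^sup>2) * integral\<^sup>L lebesgue X)"
      unfolding L2_inner_def pw by simp
    also have "\<dots> = (cmod c)\<^sup>2 * Re (integral\<^sup>L lebesgue X)" by simp
    also have "Re (integral\<^sup>L lebesgue X) = (LINT k|lebesgue. Re (X k))"
      by (rule integral_Re[OF iX, symmetric])
    also have "(LINT k|lebesgue. Re (X k)) \<ge> (LINT k|lebesgue. s * Re (p k) - w k)"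
    proof (rule integral_mono_AE)
      show "integrable lebesgue (\<lambda>k. Re (X k))" using iX by simp
      show "integrable lebesgue (\<lambda>k. s * Re (p k) - w k)"
        using dom_L1[OF pd] w by simp
      show "AE k in lebesgue. s * Re (p k) - w k \<le> Re (X k)"
        using ineq by eventually_elim (simp add: X_def)
    qed
    moreover have "(LINT k|lebesgue. s * Re (p k) - w k) = 0"
    proof -
      have "(LINT k|lebesgue. s * Re (p k) - w k) = s * (LINT k|lebesgue. Re (p k)) - integral\<^sup>L lebesgue w"
        using dom_L1[OF pd] w by simp
      also have "(LINT k|lebesgue. Re (p k)) = Re (integral\<^sup>L lebesgue p)"
        by (rule integral_Re[OF dom_L1[OF pd]])
      finally show ?thesis using ip th by simp
    qed
    ultimately show ?thesis by simp
  qed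
  finally show "0 \<le> Re (L2_inner g h)" .
qed

lemma Tth_nonneg_a:
  assumes e1: "integrable lebesgue (\<lambda>k::real^'n. ee \<phi> k)"
  shows "nonneg_op (Tth \<phi> (- integral\<^sup>L lebesgue (\<lambda>k::real^'n. ee \<phi> k)) :: ((real^'n \<Rightarrow> complex) \<times> _) set)"
proof (rule Tth_nonneg_gen[OF e1, where s = "-1"])
  show "AE k in lebesgue. \<forall>z. -1 * Re z - ee \<phi> k \<le> Re (cnj (z + of_real (ee \<phi> k)) * (of_real (\<phi> (norm k)) * z - of_real (ee \<phi> k)))"
    by (intro AE_I2 allI) (use ineq_a[OF ee_mult Phi_nonneg] in simp)
qed simp

lemma Tth_nonneg_b:
  assumes e1: "integrable lebesgue (\<lambda>k::real^'n. ee \<phi> k / \<phi> (norm k))"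
    and pos: "AE k in (lebesgue :: (real^'n) measure). 0 < \<phi> (norm k)"
  shows "nonneg_op (Tth \<phi> (integral\<^sup>L lebesgue (\<lambda>k::real^'n. ee \<phi> k / \<phi> (norm k))) :: ((real^'n \<Rightarrow> complex) \<times> _) set)"
proof (rule Tth_nonneg_gen[OF e1, where s = "1"])
  show "AE k in (lebesgue :: (real^'n) measure). \<forall>z. 1 * Re z - ee \<phi> k / \<phi> (norm k) \<le> Re (cnj (z + of_real (ee \<phi> k)) * (of_real (\<phi> (norm k)) * z - of_real (ee \<phi> k)))"
  proof -
    have "AE k in (lebesgue :: (real^'n) measure). \<forall>z. Re z - ee \<phi> k / \<phi> (norm k) \<le> Re (cnj (z + of_real (ee \<phi> k)) * (of_real (\<phi> (norm k)) * z - of_real (ee \<phi> k)))"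
      using pos
    proof eventually_elim
      case (elim k)
      show ?case using ineq_b[OF ee_mult elim] by blast
    qed
    then show ?thesis by simp
  qed
qed simp

end

lemma nn_trunc:
  fixes F :: "real^'n \<Rightarrow> real" and S :: "nat \<Rightarrow> (real^'n) set"
  assumes inf: "(\<integral>\<^sup>+ k. ennreal (F k) \<partial>lebesgue) = \<infinity>"
    and F[measurable]: "F \<in> borel_measurable lebesgue" and Fnn: "\<And>k. 0 \<le> F k"
    and S[measurable]: "\<And>j. S j \<in> sets lebesgue" and Sinc: "incseq S"
    and cover: "\<And>k. F k \<noteq> 0 \<Longrightarrow> \<exists>j. k \<in> S j"
    and int: "\<And>j. integrable lebesgue (\<lambda>k. F k * indicator (S j) k)"
  shows "\<exists>j. M < (LINT k|lebesgue. F k * indicator (S j) k)"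
proof -
  define f where "f = (\<lambda>j k. ennreal (F k * indicator (S j) k))"
  have inc: "incseq f"
  proof (rule incseq_SucI, rule le_funI)
    fix j k
    have "indicator (S j) k \<le> (indicator (S (Suc j)) k :: real)"
      using Sinc[THEN incseqD, of j "Suc j"] by (auto simp: indicator_def)
    then have "F k * indicator (S j) k \<le> F k * indicator (S (Suc j)) k"
      using Fnn[of k] by (intro mult_left_mono) auto
    then show "f j k \<le> f (Suc j) k" unfolding f_def by (rule ennreal_leI)
  qed
  have meas: "\<And>j. f j \<in> borel_measurable lebesgue" unfolding f_def by measurable
  have "(\<integral>\<^sup>+ k. ennreal (F k) \<partial>lebesgue) \<le> (\<integral>\<^sup>+ k. (SUP j. f j k) \<partial>lebesgue)"
  proof (intro nn_integral_mono)
    fix k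
    show "ennreal (F k) \<le> (SUP j. f j k)"
    proof (cases "F k = 0")
      case True then show ?thesis by simp
    next
      case False
      then obtain j where "k \<in> S j" using cover by blast
      then have "ennreal (F k) = f j k" unfolding f_def by simp
      also have "\<dots> \<le> (SUP j. f j k)" by (rule SUP_upper) simp
      finally show ?thesis .
    qed
  qed
  also have "\<dots> = (SUP j. integral\<^sup>N lebesgue (f j))"
    by (rule nn_integral_monotone_convergence_SUP[OF inc meas])
  finally have SUPeq: "(SUP j. integral\<^sup>N lebesgue (f j)) = \<infinity>" using inf by (simp add: top_unique)
  have "ennreal (max M 0) < (SUP j. integral\<^sup>N lebesgue (f j))" by (subst SUPeq) simp
  then obtain j where j: "ennreal (max M 0) < integral\<^sup>N lebesgue (f j)" by (auto simp: less_SUP_iff)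
  have "integral\<^sup>N lebesgue (f j) = ennreal (LINT k|lebesgue. F k * indicator (S j) k)"
    unfolding f_def by (rule nn_integral_eq_integral[OF int]) (simp add: Fnn)
  with j have "max M 0 < (LINT k|lebesgue. F k * indicator (S j) k)"
    by (simp add: ennreal_less_iff)
  then show ?thesis by auto
qed

lemma ineq_S2:
  fixes P E :: real and \<mu> :: complex
  assumes PE: "(1 + P) * E = 1" and P: "3 \<le> P" and a: "Re \<mu> \<le> 0"
  shows "Re (cnj (\<mu> / of_real P + of_real E) * (of_real P * (\<mu> / of_real P) - of_real E)) \<le> ((cmod \<mu>)\<^sup>2 + Re \<mu> / 2) / P"
proof -
  define a where "a = Re \<mu>"
  define b where "b = Im \<mu>"
  define R where "R = Re (cnj (\<mu> / of_real P + of_real E) * (of_real P * (\<mu> / of_real P) - of_real E))"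
  have P0: "P > 0" using P by simp
  have R: "R = (a / P + E) * (a - E) + (b / P) * b"
    unfolding R_def a_def b_def using P0 by (simp add: Re_divide Im_divide power2_eq_square field_simps)
  have Eeq: "E = 1 / (1 + P)" using PE P0 by (simp add: field_simps)
  have E4: "E \<le> 1/4" unfolding Eeq using P by (simp add: field_simps)
  have E0: "E > 0" unfolding Eeq using P0 by simp
  have "P * R = a\<^sup>2 + b\<^sup>2 + a * (P * E - E) - P * E * E"
    unfolding R using P0 by (simp add: field_simps power2_eq_square)
  also have "P * E = 1 - E" using PE by (simp add: algebra_simps)
  finally have PR: "P * R = a\<^sup>2 + b\<^sup>2 + a * (1 - 2 * E) - (1 - E) * E" by simp
  have "a * (1 - 2 * E) \<le> a / 2"
  proof -
    have "a * (1 - 2 * E) - a / 2 = a * (1/2 - 2 * E)" by (simp add: algebra_simps)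
    moreover have "a * (1/2 - 2 * E) \<le> 0" using a E4 unfolding a_def by (intro mult_nonpos_nonneg) auto
    ultimately show ?thesis by simp
  qed
  moreover have "(1 - E) * E \<ge> 0" using E4 E0 by (intro mult_nonneg_nonneg) auto
  ultimately have "P * R \<le> a\<^sup>2 + b\<^sup>2 + a / 2" using PR by linarith
  then have "R \<le> (a\<^sup>2 + b\<^sup>2 + a / 2) / P" using P0 by (simp add: field_simps)
  then show ?thesis unfolding R_def a_def b_def by (simp add: cmod_power2)
qed

lemma leb_Collect:
  assumes [measurable]: "Measurable.pred (lebesgue :: ('a::euclidean_space) measure) P"
  shows "{k. P k} \<in> sets lebesgue"
proof -
  have "{k \<in> space (lebesgue :: 'a measure). P k} \<in> sets lebesgue" by measurable
  then show ?thesis by simp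
qed

lemma ennreal_inf_sum: "(\<infinity>::ennreal) \<le> a + b + c \<Longrightarrow> a < \<infinity> \<Longrightarrow> b < \<infinity> \<Longrightarrow> c = \<infinity>"
  by (auto simp: top_unique ennreal_add_eq_top)

lemma norm_leb[measurable]: "(\<lambda>k::'a::euclidean_space. norm k) \<in> borel_measurable lebesgue"
  by (rule lebesgue_meas_of_borel) simp

context phi_ctx2 begin

lemma ee_nonneg: "0 \<le> ee \<phi> k" using ee_pos[of k] by simp

lemma F1_nonneg: "0 \<le> ee \<phi> k / \<phi> (norm k)"
  using ee_nonneg[of k] Phi_nonneg[of k] by simp

lemma exists_bad_p:
  fixes \<theta> :: complex
  assumes Kr: "(\<integral>\<^sup>+ k. ennreal (ee \<phi> k / \<phi> (norm k)) \<partial>(lebesgue :: (real^'n) measure)) = \<infinity>"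
    and Lr: "(\<integral>\<^sup>+ k. ennreal (ee \<phi> k) \<partial>(lebesgue :: (real^'n) measure)) = \<infinity>"
  shows "\<exists>p :: real^'n \<Rightarrow> complex. p \<in> mult_dom \<phi> \<and> integral\<^sup>L lebesgue p = \<theta> \<and>
     Re (LINT k|lebesgue. cnj (p k + of_real (ee \<phi> k)) * (of_real (\<phi> (norm k)) * p k - of_real (ee \<phi> k))) < 0"
proof -
  define S1 where "S1 j = {k::real^'n. norm k \<le> real j + 1 \<and> 1 / (real j + 1) \<le> \<phi> (norm k)}" for j :: nat
  have S1m[measurable]: "S1 j \<in> sets lebesgue" for j unfolding S1_def by (rule leb_Collect) measurable
  have S1b: "S1 j \<subseteq> cball 0 (real j + 1)" for j unfolding S1_def by auto
  have S1inc: "incseq S1"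
  proof (rule incseq_SucI, rule subsetI)
    fix j k assume "k \<in> S1 j"
    then have a: "norm k \<le> real j + 1" and b: "1 / (real j + 1) \<le> \<phi> (norm k)" unfolding S1_def by auto
    have "1 / (real (Suc j) + 1) \<le> 1 / (real j + 1)" by (simp add: frac_le)
    with a b show "k \<in> S1 (Suc j)" unfolding S1_def by auto
  qed
  have S1pos: "\<phi> (norm k) > 0" if "k \<in> S1 j" for k j
  proof -
    have "0 < 1 / (real j + 1)" by simp
    also have "\<dots> \<le> \<phi> (norm k)" using that unfolding S1_def by auto
    finally show ?thesis .
  qed
  have F1bd: "ee \<phi> k / \<phi> (norm k) \<le> real j + 1" if "k \<in> S1 j" for k j
  proof -
    have P: "\<phi> (norm k) > 0" by (rule S1pos[OF that])
    have "ee \<phi> k / \<phi> (norm k) \<le> 1 / \<phi> (norm k)" using ee_le1[of k] P by (simp add: divide_right_mono)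
    also have "\<dots> \<le> real j + 1" using that P unfolding S1_def by (simp add: field_simps)
    finally show ?thesis .
  qed
  have int1: "integrable lebesgue (\<lambda>k. ee \<phi> k / \<phi> (norm k) * indicator (S1 j) k)" for j
  proof -
    have fin: "emeasure lebesgue (S1 j) < \<infinity>" by (rule emeasure_lebesgue_bounded_finite[OF S1m S1b])
    have "integrable lebesgue (\<lambda>k. (real j + 1) * indicator (S1 j) k :: real)" using fin by simp
    then show ?thesis
    proof (rule Bochner_Integration.integrable_bound)
      show "(\<lambda>k. ee \<phi> k / \<phi> (norm k) * indicator (S1 j) k) \<in> borel_measurable lebesgue" by measurable
      show "AE k in lebesgue. norm (ee \<phi> k / \<phi> (norm k) * indicator (S1 j) k) \<le> norm ((real j + 1) * indicator (S1 j) k :: real)"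
        by (intro AE_I2) (use F1bd in \<open>auto simp: indicator_def abs_of_nonneg[OF ee_nonneg] abs_of_nonneg[OF Phi_nonneg]\<close>)
    qed
  qed
  have cover1: "\<exists>j. k \<in> S1 j" if "ee \<phi> k / \<phi> (norm k) \<noteq> 0" for k :: "real^'n"
  proof -
    have P: "\<phi> (norm k) > 0" using that Phi_nonneg[of k] by (cases "\<phi> (norm k) = 0") auto
    define J where "J = nat \<lceil>max (norm k) (1 / \<phi> (norm k))\<rceil>"
    have J: "max (norm k) (1 / \<phi> (norm k)) \<le> real J" unfolding J_def by (rule real_nat_ceiling_ge)
    have "norm k \<le> real J + 1" using J by simp
    moreover have "1 / (real J + 1) \<le> \<phi> (norm k)"
    proof -
      have "1 / \<phi> (norm k) \<le> real J + 1" using J by simp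
      then show ?thesis using P by (simp add: field_simps)
    qed
    ultimately show ?thesis unfolding S1_def by blast
  qed
  obtain j where j: "Re \<theta> + 2 < (LINT k|lebesgue. ee \<phi> k / \<phi> (norm k) * indicator (S1 j) k)"
    using nn_trunc[OF Kr _ F1_nonneg S1m S1inc cover1 int1] by auto
  define A1 where "A1 = (LINT k|lebesgue. ee \<phi> k / \<phi> (norm k) * indicator (S1 j) k)"
  define U where "U = {k::real^'n. real j + 1 < norm k \<and> 3 \<le> \<phi> (norm k)}"
  have Um[measurable]: "U \<in> sets lebesgue" unfolding U_def by (rule leb_Collect) measurable
  have Uinf: "(\<integral>\<^sup>+ k. ennreal (indicator U k / \<phi> (norm k)) \<partial>(lebesgue :: (real^'n) measure)) = \<infinity>"
  proof -
    have pw: "ee \<phi> k \<le> 4 * (ee \<phi> k)\<^sup>2 + indicator (cball 0 (real j + 1)) k + indicator U k / \<phi> (norm k)" for k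
    proof -
      have n1: "0 \<le> 4 * (ee \<phi> k)\<^sup>2" by simp
      have n2: "0 \<le> (indicator (cball 0 (real j + 1)) k :: real)" by simp
      have n3: "0 \<le> indicator U k / \<phi> (norm k)" using Phi_nonneg[of k] by simp
      have Ee: "ee \<phi> k = 1 / (1 + \<phi> (norm k))" by (simp add: ee_def)
      show ?thesis
      proof (cases "\<phi> (norm k) < 3")
        case True
        then have "ee \<phi> k \<ge> 1/4" unfolding Ee using Phi_nonneg[of k] by (simp add: field_simps)
        then have "ee \<phi> k \<le> 4 * (ee \<phi> k)\<^sup>2" using ee_pos[of k] by (simp add: power2_eq_square)
        then show ?thesis using n2 n3 by linarith
      next
        case False
        show ?thesis
        proof (cases "norm k \<le> real j + 1")
          case True
          then have "ee \<phi> k \<le> indicator (cball 0 (real j + 1)) k" using ee_le1[of k] by simp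
          then show ?thesis using n1 n3 by linarith
        next
          case False2: False
          then have "k \<in> U" using False unfolding U_def by auto
          then have "ee \<phi> k \<le> indicator U k / \<phi> (norm k)"
            unfolding Ee using Phi_nonneg[of k] False by (simp add: field_simps)
          then show ?thesis using n1 n2 by linarith
        qed
      qed
    qed
    have "\<infinity> = (\<integral>\<^sup>+ k. ennreal (ee \<phi> k) \<partial>(lebesgue :: (real^'n) measure))" using Lr by simp
    also have "\<dots> \<le> (\<integral>\<^sup>+ k. ennreal (4 * (ee \<phi> k)\<^sup>2) + ennreal (indicator (cball 0 (real j + 1)) k) + ennreal (indicator U k / \<phi> (norm k)) \<partial>(lebesgue :: (real^'n) measure))"
    proof (rule nn_integral_mono)
      fix k :: "real^'n"
      have "ennreal (ee \<phi> k) \<le> ennreal (4 * (ee \<phi> k)\<^sup>2 + indicator (cball 0 (real j + 1)) k + indicator U k / \<phi> (norm k))"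
        using pw[of k] by (rule ennreal_leI)
      also have "\<dots> = ennreal (4 * (ee \<phi> k)\<^sup>2) + ennreal (indicator (cball 0 (real j + 1)) k) + ennreal (indicator U k / \<phi> (norm k))"
        using Phi_nonneg[of k] by (simp add: ennreal_plus)
      finally show "ennreal (ee \<phi> k) \<le> ennreal (4 * (ee \<phi> k)\<^sup>2) + ennreal (indicator (cball 0 (real j + 1)) k) + ennreal (indicator U k / \<phi> (norm k))" .
    qed
    also have "\<dots> = (\<integral>\<^sup>+ k. ennreal (4 * (ee \<phi> k)\<^sup>2) \<partial>(lebesgue :: (real^'n) measure)) + (\<integral>\<^sup>+ k. ennreal (indicator (cball 0 (real j + 1)) k) \<partial>(lebesgue :: (real^'n) measure))
        + (\<integral>\<^sup>+ k. ennreal (indicator U k / \<phi> (norm k)) \<partial>(lebesgue :: (real^'n) measure))"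
      by (simp add: nn_integral_add)
    finally have inf: "\<infinity> \<le> (\<integral>\<^sup>+ k. ennreal (4 * (ee \<phi> k)\<^sup>2) \<partial>(lebesgue :: (real^'n) measure)) + (\<integral>\<^sup>+ k. ennreal (indicator (cball 0 (real j + 1)) k) \<partial>(lebesgue :: (real^'n) measure))
        + (\<integral>\<^sup>+ k. ennreal (indicator U k / \<phi> (norm k)) \<partial>(lebesgue :: (real^'n) measure))" .
    have f1: "(\<integral>\<^sup>+ k. ennreal (4 * (ee \<phi> k)\<^sup>2) \<partial>(lebesgue :: (real^'n) measure)) < \<infinity>"
    proof -
      have "(\<integral>\<^sup>+ k. ennreal (4 * (ee \<phi> k)\<^sup>2) \<partial>(lebesgue :: (real^'n) measure)) = ennreal (LINT k|(lebesgue :: (real^'n) measure). 4 * (ee \<phi> k)\<^sup>2)"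
        by (rule nn_integral_eq_integral) (use eL2 in auto)
      then show ?thesis by simp
    qed
    have f2: "(\<integral>\<^sup>+ k. ennreal (indicator (cball 0 (real j + 1)) k) \<partial>(lebesgue :: (real^'n) measure)) < \<infinity>"
      unfolding ennreal_indicator
      by (subst nn_integral_indicator) (simp, rule emeasure_lebesgue_cball_finite)
    show ?thesis by (rule ennreal_inf_sum[OF inf f1 f2])
  qed
  define S2 where "S2 R = U \<inter> cball 0 (real R)" for R :: nat
  have S2m[measurable]: "S2 R \<in> sets lebesgue" for R unfolding S2_def by measurable
  have S2b: "S2 R \<subseteq> cball 0 (real R)" for R unfolding S2_def by auto
  have S2inc: "incseq S2" unfolding S2_def by (intro incseq_SucI) auto
  have S2P: "3 \<le> \<phi> (norm k)" if "k \<in> S2 R" for k R using that unfolding S2_def U_def by auto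
  have S2inv: "1 / \<phi> (norm k) \<le> 1" if "k \<in> S2 R" for k R using S2P[OF that] by simp
  have S2S1: "k \<notin> S1 j" if "k \<in> S2 R" for k R using that unfolding S2_def U_def S1_def by auto
  have F2eq: "indicator U k / \<phi> (norm k) * indicator (S2 R) k = indicator (S2 R) k / \<phi> (norm k)" for k R
    unfolding S2_def by (auto simp: indicator_def)
  have int2: "integrable lebesgue (\<lambda>k. indicator U k / \<phi> (norm k) * indicator (S2 R) k)" for R
  proof -
    have fin: "emeasure lebesgue (S2 R) < \<infinity>" by (rule emeasure_lebesgue_bounded_finite[OF S2m S2b])
    have "integrable lebesgue (\<lambda>k. indicator (S2 R) k :: real)" using fin by simp
    then show ?thesis
    proof (rule Bochner_Integration.integrable_bound)
      show "(\<lambda>k. indicator U k / \<phi> (norm k) * indicator (S2 R) k) \<in> borel_measurable lebesgue" by measurable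
      show "AE k in lebesgue. norm (indicator U k / \<phi> (norm k) * indicator (S2 R) k) \<le> norm (indicator (S2 R) k :: real)"
        by (intro AE_I2) (use S2inv in \<open>auto simp: F2eq indicator_def abs_of_nonneg[OF Phi_nonneg]\<close>)
    qed
  qed
  have cover2: "\<exists>R. k \<in> S2 R" if "indicator U k / \<phi> (norm k) \<noteq> 0" for k :: "real^'n"
  proof -
    have "k \<in> U" using that by (auto simp: indicator_def split: if_splits)
    moreover have "k \<in> cball 0 (real (nat \<lceil>norm k\<rceil>))" using real_nat_ceiling_ge[of "norm k"] by simp
    ultimately show ?thesis unfolding S2_def by blast
  qed
  have F2nn: "0 \<le> indicator U k / \<phi> (norm k)" for k :: "real^'n" using Phi_nonneg[of k] by simp
  obtain R where R: "2 * (cmod (\<theta> - of_real A1))\<^sup>2 + 1 < (LINT k|lebesgue. indicator U k / \<phi> (norm k) * indicator (S2 R) k)"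
    using nn_trunc[OF Uinf _ F2nn S2m S2inc cover2 int2] by auto
  define B2 where "B2 = (LINT k|lebesgue. indicator (S2 R) k / \<phi> (norm k))"
  have B2: "2 * (cmod (\<theta> - of_real A1))\<^sup>2 + 1 < B2" using R unfolding B2_def F2eq .
  have B2pos: "B2 > 0" using B2 by (smt (verit) zero_le_power2)
  define \<mu> where "\<mu> = (\<theta> - of_real A1) / of_real B2"
  have Re\<mu>: "Re \<mu> = (Re \<theta> - A1) / B2" unfolding \<mu>_def by simp
  have Re\<mu>neg: "Re \<mu> \<le> 0" unfolding Re\<mu> using j B2pos unfolding A1_def
    by (intro divide_nonpos_pos) auto
  define p where "p = (\<lambda>k. complex_of_real (ee \<phi> k / \<phi> (norm k) * indicator (S1 j) k) + \<mu> * complex_of_real (indicator (S2 R) k / \<phi> (norm k)))"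
  have p1d: "(\<lambda>k. complex_of_real (ee \<phi> k / \<phi> (norm k) * indicator (S1 j) k)) \<in> mult_dom \<phi>"
  proof (rule bdd_dom[OF _ S1m S1b, of _ "real j + 1"])
    show "(\<lambda>k. complex_of_real (ee \<phi> k / \<phi> (norm k) * indicator (S1 j) k)) \<in> borel_measurable lebesgue" by measurable
    fix k :: "real^'n"
    show "cmod (complex_of_real (ee \<phi> k / \<phi> (norm k) * indicator (S1 j) k)) \<le> (real j + 1) * indicator (S1 j) k"
      unfolding norm_of_real using F1bd[of k j] F1_nonneg[of k] by (auto simp: indicator_def)
  qed
  have p2d: "(\<lambda>k. complex_of_real (indicator (S2 R) k / \<phi> (norm k))) \<in> mult_dom \<phi>"
  proof (rule bdd_dom[OF _ S2m S2b, of _ 1])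
    show "(\<lambda>k. complex_of_real (indicator (S2 R) k / \<phi> (norm k))) \<in> borel_measurable lebesgue" by measurable
    fix k :: "real^'n"
    show "cmod (complex_of_real (indicator (S2 R) k / \<phi> (norm k))) \<le> 1 * indicator (S2 R) k"
      unfolding norm_of_real using S2inv[of k R] Phi_nonneg[of k] by (auto simp: indicator_def)
  qed
  have pd: "p \<in> mult_dom \<phi>" unfolding p_def by (rule dom_add[OF p1d dom_scale[OF p2d]])
  have ip: "integral\<^sup>L lebesgue p = \<theta>"
  proof -
    have "integral\<^sup>L lebesgue p = (LINT k|lebesgue. complex_of_real (ee \<phi> k / \<phi> (norm k) * indicator (S1 j) k)) +
        (LINT k|lebesgue. \<mu> * complex_of_real (indicator (S2 R) k / \<phi> (norm k)))"
      unfolding p_def by (rule Bochner_Integration.integral_add[OF dom_L1[OF p1d] dom_L1[OF dom_scale[OF p2d]]])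
    also have "\<dots> = of_real A1 + \<mu> * of_real B2"
      unfolding A1_def B2_def by (simp only: integral_complex_of_real integral_mult_right_zero)
    also have "\<dots> = \<theta>" unfolding \<mu>_def using B2pos by simp
    finally show ?thesis .
  qed
  define X where "X = (\<lambda>k. cnj (p k + of_real (ee \<phi> k)) * (of_real (\<phi> (norm k)) * p k - of_real (ee \<phi> k)))"
  have iX: "integrable lebesgue X"
    unfolding X_def by (rule L2_prod_integrable[OF L2_c2'[OF pd] L2_c1'[OF pd]])
  have pwX: "Re (X k) \<le> ((cmod \<mu>)\<^sup>2 + Re \<mu> / 2) * (indicator (S2 R) k / \<phi> (norm k))" for k
  proof (cases "k \<in> S1 j")
    case True
    then have nS2: "k \<notin> S2 R" using S2S1 by blast
    have P: "\<phi> (norm k) > 0" by (rule S1pos[OF True])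
    have "p k = complex_of_real (ee \<phi> k / \<phi> (norm k))" unfolding p_def using True nS2 by simp
    then have "of_real (\<phi> (norm k)) * p k - of_real (ee \<phi> k) = 0"
      using P by (simp add: field_simps)
    then have "X k = 0" unfolding X_def by simp
    then show ?thesis using nS2 by simp
  next
    case False
    show ?thesis
    proof (cases "k \<in> S2 R")
      case True
      have P3: "3 \<le> \<phi> (norm k)" by (rule S2P[OF True])
      have "p k = \<mu> / of_real (\<phi> (norm k))" unfolding p_def using True False by (simp add: divide_inverse)
      then have "Re (X k) \<le> ((cmod \<mu>)\<^sup>2 + Re \<mu> / 2) / \<phi> (norm k)"
        unfolding X_def using ineq_S2[OF ee_mult P3 Re\<mu>neg] by simp
      then show ?thesis using True by simp
    next
      case False2: False
      have "p k = 0" unfolding p_def using False False2 by simp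
      then have "Re (X k) = - (ee \<phi> k)\<^sup>2" unfolding X_def by (simp add: power2_eq_square)
      then show ?thesis using False2 by simp
    qed
  qed
  have "Re (integral\<^sup>L lebesgue X) = (LINT k|lebesgue. Re (X k))"
    by (rule integral_Re[OF iX, symmetric])
  also have "\<dots> \<le> (LINT k|lebesgue. ((cmod \<mu>)\<^sup>2 + Re \<mu> / 2) * (indicator (S2 R) k / \<phi> (norm k)))"
  proof (rule integral_mono)
    show "integrable lebesgue (\<lambda>k. Re (X k))" using iX by simp
    have "integrable lebesgue (\<lambda>k. indicator (S2 R) k / \<phi> (norm k))" using int2[of R] unfolding F2eq .
    then show "integrable lebesgue (\<lambda>k. ((cmod \<mu>)\<^sup>2 + Re \<mu> / 2) * (indicator (S2 R) k / \<phi> (norm k)))"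
      by (rule integrable_mult_right)
    show "\<And>k. Re (X k) \<le> ((cmod \<mu>)\<^sup>2 + Re \<mu> / 2) * (indicator (S2 R) k / \<phi> (norm k))" by (rule pwX)
  qed
  also have "\<dots> = ((cmod \<mu>)\<^sup>2 + Re \<mu> / 2) * B2" unfolding B2_def by (rule integral_mult_right_zero)
  also have "\<dots> < 0"
  proof -
    define D where "D = cmod (\<theta> - of_real A1)"
    have cm: "cmod \<mu> = D / B2" unfolding \<mu>_def D_def using B2pos by (simp add: norm_divide)
    have "(cmod \<mu>)\<^sup>2 * B2 = D\<^sup>2 / B2" unfolding cm using B2pos by (simp add: power2_eq_square field_simps)
    also have "\<dots> < 1/2" using B2 B2pos unfolding D_def[symmetric] by (simp add: field_simps)
    finally have a: "(cmod \<mu>)\<^sup>2 * B2 < 1/2" .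
    have b: "Re \<mu> / 2 * B2 = (Re \<theta> - A1) / 2" unfolding Re\<mu> using B2pos by simp
    have c: "Re \<theta> - A1 < -2" using j unfolding A1_def by simp
    show ?thesis using a b c by (simp add: algebra_simps)
  qed
  finally have "Re (integral\<^sup>L lebesgue X) < 0" .
  then show ?thesis using pd ip unfolding X_def by blast
qed

end

context phi_ctx2 begin

lemma uniq:
  fixes T :: "((real^'n \<Rightarrow> complex) \<times> (real^'n \<Rightarrow> complex)) set"
  assumes Kr: "(\<integral>\<^sup>+ k. ennreal (ee \<phi> k / \<phi> (norm k)) \<partial>(lebesgue :: (real^'n) measure)) = \<infinity>"
    and Lr: "(\<integral>\<^sup>+ k. ennreal (ee \<phi> k) \<partial>(lebesgue :: (real^'n) measure)) = \<infinity>"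
    and sa: "self_adjoint_op T" and nn: "nonneg_op T" and sub: "mult_op0 \<phi> \<subseteq> T"
  shows "T = mult_op \<phi>"
proof -
  have Teq: "T = adjoint_op T" and Top: "is_operator T" using sa unfolding self_adjoint_op_def by auto
  have TL2: "T \<subseteq> L2 \<times> L2" using Top unfolding is_operator_def by auto
  have TA: "T \<subseteq> mult_op \<phi>"
  proof safe
    fix g h :: "real^'n \<Rightarrow> complex" assume gh: "(g, h) \<in> T"
    have gha: "(g, h) \<in> adjoint_op T" using gh Teq by auto
    have gh0: "(g, h) \<in> adjoint_op (mult_op0 \<phi>)" using adjoint_antimono[OF sub] gha by auto
    obtain \<kappa> where \<kappa>: "AE k in lebesgue. h k = of_real (\<phi> (norm k)) * g k + \<kappa>"
      using adj0_const[OF gh0] by blast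
    have gL: "g \<in> L2" and hL: "h \<in> L2" using adjoint_L2[OF gha] by auto
    have [measurable]: "g \<in> borel_measurable lebesgue" "h \<in> borel_measurable lebesgue"
      using gL hL by (auto dest: L2_D)
    show "(g, h) \<in> mult_op \<phi>"
    proof (cases "\<kappa> = 0")
      case True
      have hA: "AE k in lebesgue. h k = of_real (\<phi> (norm k)) * g k" using \<kappa> True by simp
      have gd: "g \<in> mult_dom \<phi>"
      proof (rule dom_intro[OF gL])
        show "(\<lambda>k. complex_of_real (1 + \<phi> (norm k)) * g k) \<in> L2"
        proof (rule L2_ae[OF L2_add[OF gL hL]])
          show "(\<lambda>k. complex_of_real (1 + \<phi> (norm k)) * g k) \<in> borel_measurable lebesgue" by measurable
          show "AE k in lebesgue. g k + h k = complex_of_real (1 + \<phi> (norm k)) * g k"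
            using hA by eventually_elim (simp add: algebra_simps)
        qed
      qed
      show "(g, h) \<in> mult_op \<phi>" unfolding mult_op_def using gd hL hA by auto
    next
      case False
      define g0 where "g0 = (\<lambda>k. g k + \<kappa> * of_real (ee \<phi> k))"
      define c where "c = - \<kappa>"
      have c0: "c \<noteq> 0" using False unfolding c_def by simp
      have g0L: "g0 \<in> L2" unfolding g0_def by (intro L2_add gL ce_L2)
      have g0d: "g0 \<in> mult_dom \<phi>"
      proof (rule dom_intro[OF g0L])
        show "(\<lambda>k. complex_of_real (1 + \<phi> (norm k)) * g0 k) \<in> L2"
        proof (rule L2_ae[OF L2_add[OF gL hL]])
          show "(\<lambda>k. complex_of_real (1 + \<phi> (norm k)) * g0 k) \<in> borel_measurable lebesgue"
            unfolding g0_def by measurable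
          show "AE k in lebesgue. g k + h k = complex_of_real (1 + \<phi> (norm k)) * g0 k"
            using \<kappa>
          proof eventually_elim
            case (elim k)
            have "complex_of_real (1 + \<phi> (norm k)) * g0 k = (1 + of_real (\<phi> (norm k))) * g k + \<kappa> * ((1 + of_real (\<phi> (norm k))) * of_real (ee \<phi> k))"
              unfolding g0_def by (simp add: algebra_simps)
            also have "\<dots> = g k + h k" using elim by (simp only: ee_mult_c) (simp add: algebra_simps)
            finally show ?case by simp
          qed
        qed
      qed
      define \<theta> where "\<theta> = integral\<^sup>L lebesgue g0 / c"
      obtain p :: "real^'n \<Rightarrow> complex" where p: "p \<in> mult_dom \<phi>" "integral\<^sup>L lebesgue p = \<theta>"
        "Re (LINT k|lebesgue. cnj (p k + of_real (ee \<phi> k)) * (of_real (\<phi> (norm k)) * p k - of_real (ee \<phi> k))) < 0"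
        using exists_bad_p[OF Kr Lr] by blast
      define f where "f = (\<lambda>k. c * p k - g0 k)"
      have fd: "f \<in> mult_dom \<phi>" unfolding f_def by (rule dom_diff[OF dom_scale[OF p(1)] g0d])
      have fi: "integral\<^sup>L lebesgue f = 0"
      proof -
        have "integral\<^sup>L lebesgue f = c * integral\<^sup>L lebesgue p - integral\<^sup>L lebesgue g0"
          unfolding f_def using dom_L1[OF p(1)] dom_L1[OF g0d] by simp
        then show ?thesis using p(2) c0 unfolding \<theta>_def by simp
      qed
      have "(f, \<lambda>k. of_real (\<phi> (norm k)) * f k) \<in> mult_op0 \<phi>" by (rule mult_op0I[OF fd fi])
      then have fa: "(f, \<lambda>k. of_real (\<phi> (norm k)) * f k) \<in> adjoint_op T" using sub Teq by auto
      have "(\<lambda>k. g k + f k, \<lambda>k. h k + of_real (\<phi> (norm k)) * f k) \<in> adjoint_op T"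
        by (rule adjoint_add[OF TL2 gha fa])
      then have "(\<lambda>k. g k + f k, \<lambda>k. h k + of_real (\<phi> (norm k)) * f k) \<in> T" using Teq by auto
      then have nn0: "0 \<le> Re (L2_inner (\<lambda>k. g k + f k) (\<lambda>k. h k + of_real (\<phi> (norm k)) * f k))"
        using nn unfolding nonneg_op_def by blast
      have "L2_inner (\<lambda>k. g k + f k) (\<lambda>k. h k + of_real (\<phi> (norm k)) * f k) =
          L2_inner (\<lambda>k. c * (p k + of_real (ee \<phi> k))) (\<lambda>k. c * (of_real (\<phi> (norm k)) * p k - of_real (ee \<phi> k)))"
      proof (rule L2_inner_cong)
        show "(\<lambda>k. g k + f k) \<in> L2" by (rule L2_add[OF gL dom_L2[OF fd]])
        show "(\<lambda>k. h k + of_real (\<phi> (norm k)) * f k) \<in> L2" by (rule L2_add[OF hL dom_Phi[OF fd]])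
        show "(\<lambda>k. c * (p k + of_real (ee \<phi> k))) \<in> L2" by (rule L2_scale[OF L2_c2'[OF p(1)]])
        show "(\<lambda>k. c * (of_real (\<phi> (norm k)) * p k - of_real (ee \<phi> k))) \<in> L2" by (rule L2_scale[OF L2_c1'[OF p(1)]])
        show "AE k in lebesgue. g k + f k = c * (p k + of_real (ee \<phi> k))"
          by (intro AE_I2) (simp add: f_def g0_def c_def algebra_simps)
        show "AE k in lebesgue. h k + of_real (\<phi> (norm k)) * f k = c * (of_real (\<phi> (norm k)) * p k - of_real (ee \<phi> k))"
          using \<kappa>
        proof eventually_elim
          case (elim k)
          have "h k + of_real (\<phi> (norm k)) * f k = c * of_real (\<phi> (norm k)) * p k + \<kappa> * (1 - of_real (\<phi> (norm k)) * of_real (ee \<phi> k))"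
            unfolding f_def g0_def using elim by (simp add: algebra_simps)
          also have "\<dots> = c * (of_real (\<phi> (norm k)) * p k - of_real (ee \<phi> k))"
            unfolding ee_Phi_c c_def by (simp add: algebra_simps)
          finally show ?case .
        qed
      qed
      also have "\<dots> = (cnj c * c) * (LINT k|lebesgue. cnj (p k + of_real (ee \<phi> k)) * (of_real (\<phi> (norm k)) * p k - of_real (ee \<phi> k)))"
        unfolding L2_inner_def by (simp add: mult_ac)
      also have "cnj c * c = complex_of_real ((cmod c)\<^sup>2)" by (metis complex_norm_square mult.commute)
      finally have "Re (L2_inner (\<lambda>k. g k + f k) (\<lambda>k. h k + of_real (\<phi> (norm k)) * f k)) =
          (cmod c)\<^sup>2 * Re (LINT k|lebesgue. cnj (p k + of_real (ee \<phi> k)) * (of_real (\<phi> (norm k)) * p k - of_real (ee \<phi> k)))"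
        by simp
      also have "\<dots> < 0" using p(3) c0 by (simp add: mult_pos_neg)
      finally show ?thesis using nn0 by simp
    qed
  qed
  have "mult_op \<phi> = adjoint_op (mult_op \<phi>)" using A_sa unfolding self_adjoint_op_def by auto
  also have "\<dots> \<subseteq> adjoint_op T" by (rule adjoint_antimono[OF TA])
  also have "\<dots> = T" using Teq by simp
  finally show ?thesis using TA by blast
qed

end

context phi_ctx begin

lemma radial_conv:
  fixes X :: "real \<Rightarrow> real"
  assumes Xm: "X \<in> borel_measurable borel" and Xnn: "\<And>x. 0 \<le> x \<Longrightarrow> 0 \<le> X x"
  shows "(\<integral>\<^sup>+ k. ennreal (1 / X (\<phi> (norm k))) \<partial>(lebesgue :: (real^'n) measure)) = \<infinity> \<longleftrightarrow>
         (\<integral>\<^sup>+ k\<in>{0<..}. ennreal (k ^ (CARD('n) - 1) / X (\<phi> k)) \<partial>lborel) = \<infinity>"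
proof -
  define F where "F r = ennreal (1 / X (\<phi> (max r 0)))" for r
  have cm: "continuous_on UNIV (\<lambda>r::real. \<phi> (max r 0))"
    by (rule continuous_on_compose2[OF cont]) (auto intro!: continuous_intros)
  have [measurable]: "(\<lambda>r::real. \<phi> (max r 0)) \<in> borel_measurable borel"
    by (rule borel_measurable_continuous_onI[OF cm])
  have [measurable]: "X \<in> borel_measurable borel" by (rule Xm)
  have Fm: "F \<in> borel_measurable borel" unfolding F_def by measurable
  have "(\<integral>\<^sup>+ k. ennreal (1 / X (\<phi> (norm k))) \<partial>(lebesgue :: (real^'n) measure)) = (\<integral>\<^sup>+ k. F (norm k) \<partial>(lebesgue :: (real^'n) measure))"
    unfolding F_def by simp
  moreover have "(\<integral>\<^sup>+ r. ennreal (r ^ (CARD('n) - 1)) * F r * indicator {0<..} r \<partial>lborel) =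
      (\<integral>\<^sup>+ k\<in>{0<..}. ennreal (k ^ (CARD('n) - 1) / X (\<phi> k)) \<partial>lborel)"
  proof (rule nn_integral_cong)
    fix r :: real
    show "ennreal (r ^ (CARD('n) - 1)) * F r * indicator {0<..} r = ennreal (r ^ (CARD('n) - 1) / X (\<phi> r)) * indicator {0<..} r"
    proof (cases "r > 0")
      case True
      have a: "0 \<le> 1 / X (\<phi> r)" using Xnn[of "\<phi> r"] nonneg[of r] True by simp
      have b: "0 \<le> r ^ (CARD('n) - 1)" using True by simp
      have "ennreal (r ^ (CARD('n) - 1)) * ennreal (1 / X (\<phi> r)) = ennreal (r ^ (CARD('n) - 1) * (1 / X (\<phi> r)))"
        by (rule ennreal_mult[OF b a, symmetric])
      then show ?thesis using True unfolding F_def by simp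
    qed simp
  qed
  ultimately show ?thesis using nn_integral_radial_infinite_iff[where 'n='n, OF Fm] by simp
qed

end

theorem mainTheorem3:
  fixes \<phi> :: "real \<Rightarrow> real"
  assumes cont: "continuous_on {0..} \<phi>"
    and nonneg: "\<And>x. 0 \<le> x \<Longrightarrow> 0 \<le> \<phi> x"
    and pos_ae: "AE k in (lebesgue :: (real^'n) measure). \<phi> (norm k) > 0"
    and finite_int: "(\<integral>\<^sup>+ k\<in>{0<..}. ennreal (k ^ (CARD('n) - 1) / (1 + \<phi> k)\<^sup>2) \<partial>lborel) < \<infinity>"
  shows "(self_adjoint_op (mult_op \<phi> :: ((real^'n \<Rightarrow> complex) \<times> _) set) \<and> nonneg_op (mult_op \<phi> :: ((real^'n \<Rightarrow> complex) \<times> _) set)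
           \<and> mult_op0 \<phi> \<subseteq> (mult_op \<phi> :: ((real^'n \<Rightarrow> complex) \<times> _) set)
           \<and> (\<forall>T :: ((real^'n \<Rightarrow> complex) \<times> (real^'n \<Rightarrow> complex)) set.
                 self_adjoint_op T \<and> nonneg_op T \<and> mult_op0 \<phi> \<subseteq> T \<longrightarrow> T = mult_op \<phi>))
     \<longleftrightarrow>
         ((\<integral>\<^sup>+ k\<in>{0<..}. ennreal (k ^ (CARD('n) - 1) / (\<phi> k * (1 + \<phi> k))) \<partial>lborel) = \<infinity>
          \<and> (\<integral>\<^sup>+ k\<in>{0<..}. ennreal (k ^ (CARD('n) - 1) / (1 + \<phi> k)) \<partial>lborel) = \<infinity>)"
proof -
  interpret phi_ctx \<phi> using cont nonneg by unfold_locales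
  have X1: "(\<lambda>x::real. (1 + x)\<^sup>2) \<in> borel_measurable borel" by measurable
  have X2: "(\<lambda>x::real. x * (1 + x)) \<in> borel_measurable borel" by measurable
  have X3: "(\<lambda>x::real. 1 + x) \<in> borel_measurable borel" by measurable
  have R1: "(\<integral>\<^sup>+ k. ennreal (1 / (1 + \<phi> (norm k))\<^sup>2) \<partial>(lebesgue :: (real^'n) measure)) = \<infinity> \<longleftrightarrow>
      (\<integral>\<^sup>+ k\<in>{0<..}. ennreal (k ^ (CARD('n) - 1) / (1 + \<phi> k)\<^sup>2) \<partial>lborel) = \<infinity>"
    by (rule radial_conv[OF X1]) simp
  have R2: "(\<integral>\<^sup>+ k. ennreal (1 / (\<phi> (norm k) * (1 + \<phi> (norm k)))) \<partial>(lebesgue :: (real^'n) measure)) = \<infinity> \<longleftrightarrow>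
      (\<integral>\<^sup>+ k\<in>{0<..}. ennreal (k ^ (CARD('n) - 1) / (\<phi> k * (1 + \<phi> k))) \<partial>lborel) = \<infinity>"
    by (rule radial_conv[OF X2]) simp
  have R3: "(\<integral>\<^sup>+ k. ennreal (1 / (1 + \<phi> (norm k))) \<partial>(lebesgue :: (real^'n) measure)) = \<infinity> \<longleftrightarrow>
      (\<integral>\<^sup>+ k\<in>{0<..}. ennreal (k ^ (CARD('n) - 1) / (1 + \<phi> k)) \<partial>lborel) = \<infinity>"
    by (rule radial_conv[OF X3]) simp
  have e2: "\<And>k::real^'n. (ee \<phi> k)\<^sup>2 = 1 / (1 + \<phi> (norm k))\<^sup>2" by (simp add: ee_def power_divide)
  have e3: "\<And>k::real^'n. ee \<phi> k / \<phi> (norm k) = 1 / (\<phi> (norm k) * (1 + \<phi> (norm k)))"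
    by (simp add: ee_def divide_divide_eq_left mult.commute)
  have e4: "\<And>k::real^'n. ee \<phi> k = 1 / (1 + \<phi> (norm k))" by (simp add: ee_def)
  have eL2: "integrable lebesgue (\<lambda>k::real^'n. (ee \<phi> k)\<^sup>2)"
  proof (rule integrableI_bounded)
    show "(\<lambda>k::real^'n. (ee \<phi> k)\<^sup>2) \<in> borel_measurable lebesgue" by measurable
    have "(\<integral>\<^sup>+ k. ennreal (1 / (1 + \<phi> (norm k))\<^sup>2) \<partial>(lebesgue :: (real^'n) measure)) \<noteq> \<infinity>"
      using R1 finite_int by auto
    then show "(\<integral>\<^sup>+ k. ennreal (norm ((ee \<phi> k)\<^sup>2)) \<partial>(lebesgue :: (real^'n) measure)) < \<infinity>"
      by (simp add: e2 less_top)
  qed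
  interpret phi_ctx2 \<phi> by unfold_locales (rule eL2)
  show ?thesis
  proof (rule iffI)
    assume L: "self_adjoint_op (mult_op \<phi> :: ((real^'n \<Rightarrow> complex) \<times> _) set) \<and> nonneg_op (mult_op \<phi> :: ((real^'n \<Rightarrow> complex) \<times> _) set)
           \<and> mult_op0 \<phi> \<subseteq> (mult_op \<phi> :: ((real^'n \<Rightarrow> complex) \<times> _) set)
           \<and> (\<forall>T :: ((real^'n \<Rightarrow> complex) \<times> (real^'n \<Rightarrow> complex)) set.
                 self_adjoint_op T \<and> nonneg_op T \<and> mult_op0 \<phi> \<subseteq> T \<longrightarrow> T = mult_op \<phi>)"
    then have U: "\<And>T :: ((real^'n \<Rightarrow> complex) \<times> (real^'n \<Rightarrow> complex)) set.
                 self_adjoint_op T \<Longrightarrow> nonneg_op T \<Longrightarrow> mult_op0 \<phi> \<subseteq> T \<Longrightarrow> T = mult_op \<phi>" by blast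
    show "(\<integral>\<^sup>+ k\<in>{0<..}. ennreal (k ^ (CARD('n) - 1) / (\<phi> k * (1 + \<phi> k))) \<partial>lborel) = \<infinity>
          \<and> (\<integral>\<^sup>+ k\<in>{0<..}. ennreal (k ^ (CARD('n) - 1) / (1 + \<phi> k)) \<partial>lborel) = \<infinity>"
    proof (rule ccontr)
      assume "\<not> ?thesis"
      then consider (K) "(\<integral>\<^sup>+ k\<in>{0<..}. ennreal (k ^ (CARD('n) - 1) / (\<phi> k * (1 + \<phi> k))) \<partial>lborel) \<noteq> \<infinity>"
        | (E) "(\<integral>\<^sup>+ k\<in>{0<..}. ennreal (k ^ (CARD('n) - 1) / (1 + \<phi> k)) \<partial>lborel) \<noteq> \<infinity>" by blast
      then show False
      proof cases
        case K
        have int: "integrable lebesgue (\<lambda>k::real^'n. ee \<phi> k / \<phi> (norm k))"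
        proof (rule integrableI_bounded)
          show "(\<lambda>k::real^'n. ee \<phi> k / \<phi> (norm k)) \<in> borel_measurable lebesgue" by measurable
          have "(\<integral>\<^sup>+ k. ennreal (1 / (\<phi> (norm k) * (1 + \<phi> (norm k)))) \<partial>(lebesgue :: (real^'n) measure)) \<noteq> \<infinity>"
            using R2 K by auto
          then show "(\<integral>\<^sup>+ k. ennreal (norm (ee \<phi> k / \<phi> (norm k))) \<partial>(lebesgue :: (real^'n) measure)) < \<infinity>"
            by (simp add: e3[symmetric] less_top abs_of_nonneg[OF ee_nonneg] abs_of_nonneg[OF Phi_nonneg])
        qed
        have "Tth \<phi> (integral\<^sup>L lebesgue (\<lambda>k::real^'n. ee \<phi> k / \<phi> (norm k))) = (mult_op \<phi> :: ((real^'n \<Rightarrow> complex) \<times> _) set)"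
          by (rule U[OF Tth_sa Tth_nonneg_b[OF int pos_ae] A0_sub_Tth])
        then show False using Tth_ne_A by blast
      next
        case E
        have int: "integrable lebesgue (\<lambda>k::real^'n. ee \<phi> k)"
        proof (rule integrableI_bounded)
          show "(\<lambda>k::real^'n. ee \<phi> k) \<in> borel_measurable lebesgue" by measurable
          have "(\<integral>\<^sup>+ k. ennreal (1 / (1 + \<phi> (norm k))) \<partial>(lebesgue :: (real^'n) measure)) \<noteq> \<infinity>"
            using R3 E by auto
          then show "(\<integral>\<^sup>+ k. ennreal (norm (ee \<phi> k)) \<partial>(lebesgue :: (real^'n) measure)) < \<infinity>"
            by (simp add: e4[symmetric] less_top abs_of_nonneg[OF ee_nonneg])
        qed
        have "Tth \<phi> (- integral\<^sup>L lebesgue (\<lambda>k::real^'n. ee \<phi> k)) = (mult_op \<phi> :: ((real^'n \<Rightarrow> complex) \<times> _) set)"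
          by (rule U[OF Tth_sa Tth_nonneg_a[OF int] A0_sub_Tth])
        then show False using Tth_ne_A by blast
      qed
    qed
  next
    assume R: "(\<integral>\<^sup>+ k\<in>{0<..}. ennreal (k ^ (CARD('n) - 1) / (\<phi> k * (1 + \<phi> k))) \<partial>lborel) = \<infinity>
          \<and> (\<integral>\<^sup>+ k\<in>{0<..}. ennreal (k ^ (CARD('n) - 1) / (1 + \<phi> k)) \<partial>lborel) = \<infinity>"
    have Kr: "(\<integral>\<^sup>+ k. ennreal (ee \<phi> k / \<phi> (norm k)) \<partial>(lebesgue :: (real^'n) measure)) = \<infinity>"
      using R R2 by (simp add: e3)
    have Lr: "(\<integral>\<^sup>+ k. ennreal (ee \<phi> k) \<partial>(lebesgue :: (real^'n) measure)) = \<infinity>"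
      using R R3 by (simp add: e4)
    show "self_adjoint_op (mult_op \<phi> :: ((real^'n \<Rightarrow> complex) \<times> _) set) \<and> nonneg_op (mult_op \<phi> :: ((real^'n \<Rightarrow> complex) \<times> _) set)
           \<and> mult_op0 \<phi> \<subseteq> (mult_op \<phi> :: ((real^'n \<Rightarrow> complex) \<times> _) set)
           \<and> (\<forall>T :: ((real^'n \<Rightarrow> complex) \<times> (real^'n \<Rightarrow> complex)) set.
                 self_adjoint_op T \<and> nonneg_op T \<and> mult_op0 \<phi> \<subseteq> T \<longrightarrow> T = mult_op \<phi>)"
      using A_sa A_nonneg mult_op0_sub uniq[OF Kr Lr] by blast
  qed
qed

end
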